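(* Let $\gamma$ follow the MFTR distribution with parameters $K>0$, $\Delta\in[0,1)$, $m>0$, $\mu>0$ and mean $\overline{\gamma}>0$. Then the ergodic capacity $\overline{C}=\int_0^\infty\log_2(1+x)f_\gamma(x)\,dx$ equals $$\overline{C}=\sum_{i=0}^\infty w_i\frac{(\lambda_i/\nu_i)^{\lambda_i}}{\Gamma(\lambda_i)\ln 2}\sum_{k=1}^\infty\frac1k\Gamma(k+\lambda_i)\,\mathbf{U}\!\left(k+\lambda_i,1+\lambda_i,\frac{\lambda_i}{\nu_i}\right),$$ where $\lambda_i=\mu+i$, $\nu_i=\frac{\overline{\gamma}(\mu+i)}{\mu(K+1)}$, $\mathbf{U}$ is the confluent hypergeometric Kummer function of the second kind, and $$w_i=\frac{\Gamma(m+i)(\mu K)^i m^m}{\Gamma(m)\Gamma(i+1)}\cdot\frac{(1-\Delta)^i}{\sqrt{\pi}\,(\mu K(1-\Delta)+m)^{m+i}}\sum_{q=0}^{i}\binom{i}{q}\frac{\Gamma(q+\frac12)}{\Gamma(q+1)}\left(\frac{2\Delta}{1-\Delta}\right)^q{}_2F_1\!\left(m+i,q+\tfrac12;q+1;\frac{-2\mu K\Delta}{\mu K(1-\Delta)+m}\right).$$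
   Context: MFTR (multi-cluster fluctuating two-ray) distribution. Fix parameters $K>0$, $\Delta\in[0,1]$, $m>0$, $\mu>0$, $\overline{\gamma}>0$. Physical model (for positive integer $\mu$): let $W=\left|\sqrt{\zeta}\,(V_1e^{j\phi_1}+V_2e^{j\phi_2})+X_1+jY_1\right|^2+\sum_{i=2}^{\mu}\left|\sqrt{\zeta}\,U_ie^{j\varphi_i}+X_i+jY_i\right|^2$, where $V_1,V_2,U_2,\dots,U_\mu\ge 0$ are constants, $\phi_1,\phi_2,\varphi_2,\dots,\varphi_\mu$ are i.i.d. uniform on $[0,2\pi)$, $X_i,Y_i$ ($i=1,\dots,\mu$) are i.i.d. $\mathcal{N}(0,\sigma^2)$, and $\zeta$ is Gamma distributed with density $m^m x^{m-1}e^{-mx}/\Gamma(m)$ on $x>0$ (unit mean), all mutually independent; $K=\frac{V_1^2+V_2^2+\sum_{i=2}^\mu U_i^2}{2\sigma^2\mu}$, $\Delta=\frac{2V_1V_2}{V_1^2+V_2^2+\sum_{i=2}^\mu U_i^2}$, and the SNR is $\gamma=(E_s/N_0)W$ with constant $E_s/N_0>0$, so that $\overline{\gamma}=\mathbb{E}\{\gamma\}=(E_s/N_0)2\sigma^2\mu(1+K)$. General definition (any real $\mu>0$; for integer $\mu$ it yields the same law as the physical model): $\gamma$ has the MFTR distribution with parameters $(K,\Delta,m,\mu,\overline{\gamma})$ if, with $\Theta$ uniform on $[0,\pi]$ and conditionally on $\Theta=\theta$, $\gamma$ has the $\kappa$-$\mu$ shadowed distribution with parameters $\kappa_\theta=K(1+\Delta\cos\theta)$,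 $\mu$, $m$ and mean $\overline{\gamma}_\theta=\overline{\gamma}(1+\kappa_\theta)/(1+K)$. Here the $\kappa$-$\mu$ shadowed distribution with parameters $\kappa\ge0,\mu>0,m>0$ and mean $\bar g>0$ is the law on $(0,\infty)$ with MGF $\mathbb{E}\{e^{s\gamma}\}=\left(1-\frac{\bar g s}{\mu(1+\kappa)}\right)^{m-\mu}\left(1-\frac{(\mu\kappa+m)\bar g s}{m\mu(1+\kappa)}\right)^{-m}$, $s\le0$. $f_\gamma$ is the PDF of $\gamma$; ${}_2F_1$ is the Gauss hypergeometric function; $\mathbf{U}(a,b,z)=\frac{1}{\Gamma(a)}\int_0^\infty e^{-zt}t^{a-1}(1+t)^{b-a-1}dt$ for $a,z>0$. *)

theory Defs
  imports "HOL-Probability.Probability"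
begin

text \<open>MGF of the kappa-mu shadowed distribution (parameters kappa, mu, m, mean gb), for s \<le> 0.\<close>
definition kms_mgf :: "real \<Rightarrow> real \<Rightarrow> real \<Rightarrow> real \<Rightarrow> real \<Rightarrow> real" where
  "kms_mgf \<kappa> \<mu> m gb s =
     (1 - gb * s / (\<mu> * (1 + \<kappa>))) powr (m - \<mu>) *
     (1 - (\<mu> * \<kappa> + m) * gb * s / (m * \<mu> * (1 + \<kappa>))) powr (- m)"

definition is_kms_law :: "real \<Rightarrow> real \<Rightarrow> real \<Rightarrow> real \<Rightarrow> real measure \<Rightarrow> bool" where
  "is_kms_law \<kappa> \<mu> m gb N \<longleftrightarrow>
     prob_space N \<and> sets N = sets borel \<and> (AE x in N. 0 < x) \<and>
     (\<forall>s\<le>0. (\<integral>x. exp (s * x) \<partial>N) = kms_mgf \<kappa> \<mu> m gb s)"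

definition is_mftr_law :: "real \<Rightarrow> real \<Rightarrow> real \<Rightarrow> real \<Rightarrow> real \<Rightarrow> real measure \<Rightarrow> bool" where
  "is_mftr_law K \<Delta> m \<mu> gb M \<longleftrightarrow>
     prob_space M \<and> sets M = sets borel \<and>
     (\<exists>N :: real \<Rightarrow> real measure.
        (\<forall>\<theta>\<in>{0..pi}. is_kms_law (K * (1 + \<Delta> * cos \<theta>)) \<mu> m
                          (gb * (1 + K * (1 + \<Delta> * cos \<theta>)) / (1 + K)) (N \<theta>)) \<and>
        (\<forall>A\<in>sets borel. measure M A = (LINT \<theta>:{0..pi}|lborel. measure (N \<theta>) A) / pi))"

definition is_mftr_pdf :: "real \<Rightarrow> real \<Rightarrow> real \<Rightarrow> real \<Rightarrow> real \<Rightarrow> (real \<Rightarrow> real) \<Rightarrow> bool" where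
  "is_mftr_pdf K \<Delta> m \<mu> gb f \<longleftrightarrow>
     f \<in> borel_measurable lborel \<and> (\<forall>x. 0 \<le> f x) \<and>
     is_mftr_law K \<Delta> m \<mu> gb (density lborel (\<lambda>x. ennreal (f x)))"

text \<open>Gauss hypergeometric function 2F1(a,b;c;z), via Euler's integral representation
  (the principal branch; valid for c > b > 0 and real z < 1, which covers all uses here).\<close>
definition hyp2F1 :: "real \<Rightarrow> real \<Rightarrow> real \<Rightarrow> real \<Rightarrow> real" where
  "hyp2F1 a b c z = Gamma c / (Gamma b * Gamma (c - b)) *
     (LINT t:{0<..<1}|lborel. t powr (b - 1) * (1 - t) powr (c - b - 1) * (1 - z * t) powr (- a))"

text \<open>Kummer (Tricomi) confluent hypergeometric function of the second kind, for a, z > 0.\<close>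
definition kummerU :: "real \<Rightarrow> real \<Rightarrow> real \<Rightarrow> real" where
  "kummerU a b z = (LINT t:{0<..}|lborel. exp (- z * t) * t powr (a - 1) * (1 + t) powr (b - a - 1))
                   / Gamma a"

definition mftr_w :: "real \<Rightarrow> real \<Rightarrow> real \<Rightarrow> real \<Rightarrow> nat \<Rightarrow> real" where
  "mftr_w K \<Delta> m \<mu> i =
     Gamma (m + real i) * (\<mu> * K) ^ i * m powr m / (Gamma m * Gamma (real i + 1)) *
     ((1 - \<Delta>) ^ i / (sqrt pi * (\<mu> * K * (1 - \<Delta>) + m) powr (m + real i))) *
     (\<Sum>q = 0..i. real (i choose q) * Gamma (real q + 1/2) / Gamma (real q + 1) *
        (2 * \<Delta> / (1 - \<Delta>)) ^ q *
        hyp2F1 (m + real i) (real q + 1/2) (real q + 1)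
               (- 2 * \<mu> * K * \<Delta> / (\<mu> * K * (1 - \<Delta>) + m)))"

definition mftr_lambda :: "real \<Rightarrow> nat \<Rightarrow> real" where
  "mftr_lambda \<mu> i = \<mu> + real i"

definition mftr_nu :: "real \<Rightarrow> real \<Rightarrow> real \<Rightarrow> nat \<Rightarrow> real" where
  "mftr_nu K \<mu> gb i = gb * (\<mu> + real i) / (\<mu> * (K + 1))"

end

theory Submission
  imports Defs
begin


lemma gamma_nn:
  fixes lam c :: real assumes "lam > 0" "c > 0"
  shows "(\<integral>\<^sup>+t. ennreal (indicator {0<..} t * t powr (lam - 1) * exp (- c * t)) \<partial>lborel)
         = ennreal (Gamma lam / c powr lam)"
proof -
  have G: "Gamma lam = (\<integral>\<^sup>+t. ennreal (indicator {0..} t * t powr (lam - 1) / exp t) \<partial>lborel)"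
    using Gamma_conv_nn_integral_real[OF assms(1)] .
  have "(\<integral>\<^sup>+t. ennreal (indicator {0..} t * t powr (lam - 1) / exp t) \<partial>lborel)
      = \<bar>c\<bar> * (\<integral>\<^sup>+t. ennreal (indicator {0..} (0 + c * t) * (0 + c*t) powr (lam - 1) / exp (0 + c*t)) \<partial>lborel)"
    by (rule nn_integral_real_affine) (use assms in auto)
  also have "\<dots> = ennreal c * (\<integral>\<^sup>+t. ennreal (c powr (lam - 1)) * ennreal (indicator {0<..} t * t powr (lam - 1) * exp (- c * t)) \<partial>lborel)"
  proof -
    have "ennreal (indicator {0..} (0 + c * t) * (0 + c*t) powr (lam - 1) / exp (0 + c*t))
       = ennreal (c powr (lam - 1)) * ennreal (indicator {0<..} t * t powr (lam - 1) * exp (- c * t))" for t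
    proof (cases "t > 0")
      case True
      then show ?thesis using assms
        by (simp add: ennreal_mult'[symmetric] powr_mult exp_minus field_simps indicator_def)
    next
      case False
      then show ?thesis using assms
        by (auto simp: indicator_def zero_le_mult_iff zero_le_divide_iff)
    qed
    then show ?thesis using assms by simp
  qed
  also have "\<dots> = ennreal c * ennreal (c powr (lam - 1)) * (\<integral>\<^sup>+t. ennreal (indicator {0<..} t * t powr (lam - 1) * exp (- c * t)) \<partial>lborel)"
    by (subst nn_integral_cmult) (auto simp: mult.assoc)
  finally have "ennreal (Gamma lam) = ennreal (c powr lam) * (\<integral>\<^sup>+t. ennreal (indicator {0<..} t * t powr (lam - 1) * exp (- c * t)) \<partial>lborel)"
    using G assms by (simp add: ennreal_mult'[symmetric] powr_diff field_simps)
  then have "ennreal (1 / c powr lam) * ennreal (Gamma lam) = (ennreal (1 / c powr lam) * ennreal (c powr lam)) * (\<integral>\<^sup>+t. ennreal (indicator {0<..} t * t powr (lam - 1) * exp (- c * t)) \<partial>lborel)"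
    by (simp add: mult.assoc)
  also have "ennreal (1 / c powr lam) * ennreal (c powr lam) = 1"
    using assms by (simp add: ennreal_mult'[symmetric])
  finally show ?thesis using assms
    by (simp add: ennreal_mult'[symmetric] field_simps)
qed


lemma exp_seg_integral:
  fixes s x :: real assumes "s > 0" "x \<ge> 0"
  shows "(\<integral>\<^sup>+u. ennreal (exp (- s * (1 + u))) * indicator {0..x} u \<partial>lborel)
        = ennreal (exp (- s) * (1 - exp (- s * x)) / s)"
proof -
  have "((\<lambda>u. exp (- s * (1 + u))) has_integral ((- exp (- s * (1 + x)) / s) - (- exp (- s * (1 + 0)) / s))) {0..x}"
    apply (rule fundamental_theorem_of_calculus)
    using assms apply simp
    using assms by (auto intro!: derivative_eq_intros simp: has_real_derivative_iff_has_vector_derivative[symmetric] has_field_derivative_at_within field_simps)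
  then have "((\<lambda>u. exp (- s * (1 + u))) has_integral (exp (- s) * (1 - exp (- s * x)) / s)) {0..x}"
    using assms by (simp add: field_simps exp_add[symmetric] exp_diff)
  from nn_integral_has_integral_lebesgue'[OF _ this] show ?thesis by simp
qed

lemma ln_integral:
  fixes x :: real assumes "x \<ge> 0"
  shows "(\<integral>\<^sup>+u. ennreal (1 / (1 + u)) * indicator {0..x} u \<partial>lborel) = ennreal (ln (1 + x))"
proof -
  have "((\<lambda>u. 1 / (1 + u)) has_integral (ln (1 + x) - ln (1 + 0))) {0..x}"
    apply (rule fundamental_theorem_of_calculus)
    using assms apply simp
    apply (auto intro!: derivative_eq_intros simp: has_real_derivative_iff_has_vector_derivative[symmetric] has_field_derivative_at_within)
    done
  from nn_integral_has_integral_lebesgue'[OF _ this] show ?thesis by simp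
qed

lemma frullani:
  fixes x :: real assumes "x \<ge> 0"
  shows "(\<integral>\<^sup>+s. ennreal (indicator {0<..} s * exp (- s) * (1 - exp (- s * x)) / s) \<partial>lborel)
        = ennreal (ln (1 + x))"
proof -
  have "(\<integral>\<^sup>+s. ennreal (indicator {0<..} s * exp (- s) * (1 - exp (- s * x)) / s) \<partial>lborel)
     = (\<integral>\<^sup>+s. \<integral>\<^sup>+u. ennreal (indicator {0<..} s * exp (- s * (1 + u))) * indicator {0..x} u \<partial>lborel \<partial>lborel)"
  proof (intro nn_integral_cong)
    fix s :: real
    show "ennreal (indicator {0<..} s * exp (- s) * (1 - exp (- s * x)) / s)
        = (\<integral>\<^sup>+u. ennreal (indicator {0<..} s * exp (- s * (1 + u))) * indicator {0..x} u \<partial>lborel)"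
    proof (cases "s > 0")
      case True then show ?thesis using exp_seg_integral[OF True assms] by simp
    next
      case False then show ?thesis by (simp add: indicator_def)
    qed
  qed
  also have "\<dots> = (\<integral>\<^sup>+u. \<integral>\<^sup>+s. ennreal (indicator {0<..} s * exp (- s * (1 + u))) * indicator {0..x} u \<partial>lborel \<partial>lborel)"
    by (rule lborel_pair.Fubini') measurable
  also have "\<dots> = (\<integral>\<^sup>+u. ennreal (1 / (1 + u)) * indicator {0..x} u \<partial>lborel)"
  proof (intro nn_integral_cong)
    fix u :: real
    show "(\<integral>\<^sup>+s. ennreal (indicator {0<..} s * exp (- s * (1 + u))) * indicator {0..x} u \<partial>lborel)
        = ennreal (1 / (1 + u)) * indicator {0..x} u"
    proof (cases "u \<in> {0..x}")
      case True
      have "(\<integral>\<^sup>+s. ennreal (indicator {0<..} s * exp (- s * (1 + u))) \<partial>lborel)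
          = (\<integral>\<^sup>+s. ennreal (indicator {0<..} s * s powr (1 - 1) * exp (- (1 + u) * s)) \<partial>lborel)"
        by (intro nn_integral_cong) (auto simp: indicator_def algebra_simps)
      also have "\<dots> = ennreal (Gamma 1 / (1 + u) powr 1)"
        using True by (intro gamma_nn) auto
      finally show ?thesis using True by simp
    qed simp
  qed
  also have "\<dots> = ennreal (ln (1 + x))" by (rule ln_integral[OF assms])
  finally show ?thesis .
qed


lemma ln_laplace:
  fixes P :: "real measure"
  assumes P: "prob_space P" and sP: "sets P = sets borel" and pos: "AE x in P. 0 \<le> x"
  shows "(\<integral>\<^sup>+x. ennreal (ln (1 + x)) \<partial>P)
       = (\<integral>\<^sup>+s. ennreal (indicator {0<..} s * exp (- s) * (1 - (\<integral>x. exp (- s * x) \<partial>P)) / s) \<partial>lborel)"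
proof -
  interpret prob_space P by (rule P)
  interpret pair_sigma_finite P lborel ..
  have mP[measurable_cong]: "sets P = sets borel" by (rule sP)
  have "(\<integral>\<^sup>+x. ennreal (ln (1 + x)) \<partial>P)
      = (\<integral>\<^sup>+x. \<integral>\<^sup>+s. ennreal (indicator {0<..} s * exp (- s) * (1 - exp (- s * x)) / s) \<partial>lborel \<partial>P)"
    apply (rule nn_integral_cong_AE) apply (rule eventually_mono[OF pos]) by (rule frullani[symmetric])
  also have "\<dots> = (\<integral>\<^sup>+s. \<integral>\<^sup>+x. ennreal (indicator {0<..} s * exp (- s) * (1 - exp (- s * x)) / s) \<partial>P \<partial>lborel)"
    by (rule Fubini'[symmetric]) measurable
  also have "\<dots> = (\<integral>\<^sup>+s. ennreal (indicator {0<..} s * exp (- s) * (1 - (\<integral>x. exp (- s * x) \<partial>P)) / s) \<partial>lborel)"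
  proof (intro nn_integral_cong)
    fix s :: real
    show "(\<integral>\<^sup>+x. ennreal (indicator {0<..} s * exp (- s) * (1 - exp (- s * x)) / s) \<partial>P)
        = ennreal (indicator {0<..} s * exp (- s) * (1 - (\<integral>x. exp (- s * x) \<partial>P)) / s)"
    proof (cases "s > 0")
      case True
      have ie: "integrable P (\<lambda>x. exp (- s * x))"
        apply (rule integrable_const_bound[where B=1])
        using pos True apply (auto elim!: eventually_mono simp: mult_nonneg_nonneg)
        done
      have "(\<integral>\<^sup>+x. ennreal (indicator {0<..} s * exp (- s) * (1 - exp (- s * x)) / s) \<partial>P)
          = (\<integral>\<^sup>+x. ennreal (exp (- s) / s * (1 - exp (- s * x))) \<partial>P)"
        using True by (intro nn_integral_cong) (simp add: field_simps)
      also have "\<dots> = ennreal (\<integral>x. exp (- s) / s * (1 - exp (- s * x)) \<partial>P)"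
        apply (rule nn_integral_eq_integral)
        using ie apply (intro integrable_mult_right Bochner_Integration.integrable_diff) apply auto[2]
        using pos True by (auto elim!: eventually_mono simp: mult_nonneg_nonneg)
      also have "(\<integral>x. exp (- s) / s * (1 - exp (- s * x)) \<partial>P) = exp (- s) / s * (1 - (\<integral>x. exp (- s * x) \<partial>P))"
        using ie by (simp add: Bochner_Integration.integral_diff prob_space)
      finally show ?thesis using True by (simp add: field_simps)
    qed simp
  qed
  finally show ?thesis .
qed


lemma mixture_measurable:
  fixes M :: "real measure" and N :: "real \<Rightarrow> real measure"
  assumes PM: "prob_space M"
    and PN: "\<And>\<theta>. \<theta> \<in> {0..pi} \<Longrightarrow> prob_space (N \<theta>) \<and> sets (N \<theta>) = sets borel"
    and mix: "\<forall>A\<in>sets borel. measure M A = (LINT \<theta>:{0..pi}|lborel. measure (N \<theta>) A) / pi"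
    and sM: "sets M = sets borel"
    and A: "A \<in> sets borel"
  shows "set_integrable lborel {0..pi} (\<lambda>\<theta>. measure (N \<theta>) A)"
proof (rule ccontr)
  assume nA: "\<not> ?thesis"
  have A': "UNIV - A \<in> sets borel" using A by auto
  have nA': "\<not> set_integrable lborel {0..pi} (\<lambda>\<theta>. measure (N \<theta>) (UNIV - A))"
  proof
    assume i: "set_integrable lborel {0..pi} (\<lambda>\<theta>. measure (N \<theta>) (UNIV - A))"
    have c: "set_integrable lborel {0..pi} (\<lambda>\<theta>. 1::real)"
      by (simp add: set_integrable_def)
    have "set_integrable lborel {0..pi} (\<lambda>\<theta>. 1 - measure (N \<theta>) (UNIV - A))"
      using set_integral_diff(1)[OF c i] by simp
    moreover have "(\<lambda>\<theta>. indicator {0..pi} \<theta> *\<^sub>R (1 - measure (N \<theta>) (UNIV - A))) = (\<lambda>\<theta>. indicator {0..pi} \<theta> *\<^sub>R measure (N \<theta>) A)"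
    proof (rule ext)
    fix \<theta> show "indicator {0..pi} \<theta> *\<^sub>R (1 - measure (N \<theta>) (UNIV - A)) = indicator {0..pi} \<theta> *\<^sub>R measure (N \<theta>) A"
    proof (cases "\<theta> \<in> {0..pi}")
      case True
      then interpret prob_space "N \<theta>" using PN by auto
      have "measure (N \<theta>) (UNIV - A) = 1 - measure (N \<theta>) A"
        using prob_compl[of A] A PN[OF True] sets_eq_imp_space_eq[of "N \<theta>" borel] by (simp add: Compl_eq_Diff_UNIV)
      then show ?thesis by simp
    qed simp
    qed
    ultimately show False using nA unfolding set_integrable_def by simp
  qed
  have "measure M A = 0"
    using mix A nA unfolding set_lebesgue_integral_def set_integrable_def
    by (simp add: not_integrable_integral_eq)
  moreover have "measure M (UNIV - A) = 0"
    using mix A' nA' unfolding set_lebesgue_integral_def set_integrable_def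
    by (simp add: not_integrable_integral_eq)
  moreover have "measure M A + measure M (UNIV - A) = 1"
  proof -
    interpret prob_space M by (rule PM)
    show ?thesis using prob_compl[of A] A sM sets_eq_imp_space_eq[OF sM] by (simp add: Compl_eq_Diff_UNIV)
  qed
  ultimately show False by simp
qed


lemma mixture_nn:
  fixes M :: "real measure" and N :: "real \<Rightarrow> real measure" and g :: "real \<Rightarrow> ennreal"
  assumes PM: "prob_space M"
    and PN: "\<And>\<theta>. \<theta> \<in> {0..pi} \<Longrightarrow> prob_space (N \<theta>) \<and> sets (N \<theta>) = sets borel"
    and mix: "\<forall>A\<in>sets borel. measure M A = (LINT \<theta>:{0..pi}|lborel. measure (N \<theta>) A) / pi"
    and sM: "sets M = sets borel"
    and g[measurable]: "g \<in> borel_measurable borel"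
  shows "(\<integral>\<^sup>+x. g x \<partial>M) = (\<integral>\<^sup>+\<theta>. ennreal (indicator {0..pi} \<theta> / pi) * (\<integral>\<^sup>+x. g x \<partial>N \<theta>) \<partial>lborel)"
proof -
  have emP: "emeasure P A = ennreal (measure P A)" if "prob_space P" for P :: "real measure" and A
    using that by (simp add: finite_measure.emeasure_eq_measure prob_space_def)
  define N' where "N' \<theta> = (if \<theta> \<in> {0..pi} then N \<theta> else N 0)" for \<theta>
  define U where "U = density lborel (\<lambda>\<theta>. ennreal (indicator {0..pi} \<theta> / pi))"
  have PN': "prob_space (N' \<theta>)" "sets (N' \<theta>) = sets borel" for \<theta>
    using PN[of \<theta>] PN[of 0] by (auto simp: N'_def)
  have sU[measurable_cong]: "sets U = sets borel" by (simp add: U_def)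
  have spU: "space U = UNIV" by (simp add: U_def)
  have emN': "(\<lambda>\<theta>. emeasure (N' \<theta>) A) = (\<lambda>\<theta>. ennreal (indicator {0..pi} \<theta> *\<^sub>R measure (N \<theta>) A + (1 - indicator {0..pi} \<theta>) * measure (N 0) A))"
    if A: "A \<in> sets borel" for A
  proof (rule ext)
    fix \<theta>
    show "emeasure (N' \<theta>) A = ennreal (indicator {0..pi} \<theta> *\<^sub>R measure (N \<theta>) A + (1 - indicator {0..pi} \<theta>) * measure (N 0) A)"
      using PN[of \<theta>] PN[of 0] by (auto simp: emP N'_def indicator_def)
  qed
  have int: "set_integrable lborel {0..pi} (\<lambda>\<theta>. measure (N \<theta>) A)" if "A \<in> sets borel" for A
    by (rule mixture_measurable[OF PM PN mix sM that]) auto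
  have meas: "N' \<in> measurable U (subprob_algebra borel)"
  proof (rule measurable_subprob_algebra)
    show "subprob_space (N' a)" for a using PN'(1)[of a] by (rule prob_space_imp_subprob_space)
    show "sets (N' a) = sets borel" for a by (rule PN'(2))
    fix A :: "real set" assume A: "A \<in> sets borel"
    have "(\<lambda>\<theta>. indicator {0..pi} \<theta> *\<^sub>R measure (N \<theta>) A) \<in> borel_measurable lborel"
      using int[OF A] unfolding set_integrable_def by (rule borel_measurable_integrable)
    then have "(\<lambda>\<theta>. indicator {0..pi} \<theta> *\<^sub>R measure (N \<theta>) A) \<in> borel_measurable borel" by simp
    then show "(\<lambda>\<theta>. emeasure (N' \<theta>) A) \<in> borel_measurable U"
      unfolding emN'[OF A] by measurable
  qed
  have MU: "M = U \<bind> N'"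
  proof (rule measure_eqI)
    show "sets M = sets (U \<bind> N')" using sM sets_bind[of U N' borel] PN'(2) spU by auto
    fix A assume "A \<in> sets M"
    then have A: "A \<in> sets borel" using sM by simp
    have "emeasure (U \<bind> N') A = (\<integral>\<^sup>+\<theta>. emeasure (N' \<theta>) A \<partial>U)"
      by (rule emeasure_bind) (use meas A spU in auto)
    also have "\<dots> = (\<integral>\<^sup>+\<theta>. ennreal (indicator {0..pi} \<theta> / pi) * emeasure (N' \<theta>) A \<partial>lborel)"
    proof -
      have "(\<lambda>\<theta>. emeasure (N' \<theta>) A) \<in> borel_measurable U"
        using measurable_compose[OF meas measurable_emeasure_subprob_algebra[of A borel]] A by simp
      then have "(\<lambda>\<theta>. emeasure (N' \<theta>) A) \<in> borel_measurable lborel"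
        by (subst (asm) measurable_cong_sets[OF sU refl]) simp
      then show ?thesis unfolding U_def by (subst nn_integral_density) auto
    qed
    also have "\<dots> = (\<integral>\<^sup>+\<theta>. ennreal (indicator {0..pi} \<theta> *\<^sub>R measure (N \<theta>) A / pi) \<partial>lborel)"
    proof (intro nn_integral_cong)
      fix \<theta>
      show "ennreal (indicator {0..pi} \<theta> / pi) * emeasure (N' \<theta>) A = ennreal (indicator {0..pi} \<theta> *\<^sub>R measure (N \<theta>) A / pi)"
        using PN[of \<theta>] by (auto simp: emP N'_def indicator_def ennreal_mult'[symmetric])
    qed
    also have "\<dots> = ennreal (\<integral>\<theta>. indicator {0..pi} \<theta> *\<^sub>R measure (N \<theta>) A / pi \<partial>lborel)"
    proof (rule nn_integral_eq_integral)
      show "integrable lborel (\<lambda>\<theta>. indicator {0..pi} \<theta> *\<^sub>R measure (N \<theta>) A / pi)"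
        using int[OF A] unfolding set_integrable_def by simp
      show "AE x in lborel. 0 \<le> indicator {0..pi} x *\<^sub>R measure (N x) A / pi" by auto
    qed
    also have "\<dots> = ennreal (measure M A)"
      using mix A by (simp add: set_lebesgue_integral_def)
    also have "\<dots> = emeasure M A"
    proof -
      interpret prob_space M by (rule PM)
      show ?thesis by (simp add: emeasure_eq_measure)
    qed
    finally show "emeasure M A = emeasure (U \<bind> N') A" ..
  qed
  have "(\<integral>\<^sup>+x. g x \<partial>M) = (\<integral>\<^sup>+\<theta>. \<integral>\<^sup>+x. g x \<partial>N' \<theta> \<partial>U)"
    unfolding MU by (rule nn_integral_bind[OF _ meas]) simp
  also have "\<dots> = (\<integral>\<^sup>+\<theta>. ennreal (indicator {0..pi} \<theta> / pi) * (\<integral>\<^sup>+x. g x \<partial>N' \<theta>) \<partial>lborel)"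
  proof -
    have "(\<lambda>\<theta>. \<integral>\<^sup>+x. g x \<partial>N' \<theta>) \<in> borel_measurable U"
      using measurable_compose[OF meas nn_integral_measurable_subprob_algebra[of g borel]] by simp
    then have "(\<lambda>\<theta>. \<integral>\<^sup>+x. g x \<partial>N' \<theta>) \<in> borel_measurable lborel"
      by (subst (asm) measurable_cong_sets[OF sU refl]) simp
    then show ?thesis unfolding U_def by (subst nn_integral_density) auto
  qed
  also have "\<dots> = (\<integral>\<^sup>+\<theta>. ennreal (indicator {0..pi} \<theta> / pi) * (\<integral>\<^sup>+x. g x \<partial>N \<theta>) \<partial>lborel)"
    by (intro nn_integral_cong) (simp add: N'_def indicator_def)
  finally show ?thesis .
qed


definition pk :: "real \<Rightarrow> real \<Rightarrow> real \<Rightarrow> nat \<Rightarrow> real" where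
  "pk \<kappa> \<mu> m i = (m / (m + \<mu> * \<kappa>)) powr m * (pochhammer m i / fact i) * (\<mu> * \<kappa> / (m + \<mu> * \<kappa>)) ^ i"

lemma pk_nonneg: "\<kappa> \<ge> 0 \<Longrightarrow> \<mu> > 0 \<Longrightarrow> m > 0 \<Longrightarrow> pk \<kappa> \<mu> m i \<ge> 0"
  unfolding pk_def by (intro mult_nonneg_nonneg divide_nonneg_nonneg pochhammer_nonneg) auto

lemma ring_aux: "(X::real) * Q * (1 - c * y) = X * Q - (X * y) * (c * Q)"
  by (simp add: algebra_simps)

lemma powr_mult3: "(x::real) > 0 \<Longrightarrow> y > 0 \<Longrightarrow> z > 0 \<Longrightarrow> (x * y * z) powr e = x powr e * y powr e * z powr e"
  by (simp add: powr_mult)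

lemma kms_series:
  fixes \<kappa> \<mu> m gb s :: real
  assumes k: "\<kappa> \<ge> 0" and mu: "\<mu> > 0" and m: "m > 0" and gb: "gb > 0" and s: "s \<ge> 0"
  shows "(\<lambda>i. pk \<kappa> \<mu> m i * (1 + gb / (\<mu> * (1 + \<kappa>)) * s) powr (- (\<mu> + real i))) sums kms_mgf \<kappa> \<mu> m gb (- s)"
proof -
  define a where "a = gb / (\<mu> * (1 + \<kappa>))"
  define X where "X = 1 + a * s"
  define r where "r = \<mu> * \<kappa> / m"
  define c where "c = \<mu> * \<kappa> / (m + \<mu> * \<kappa>)"
  define y where "y = 1 / X"
  have a0: "a > 0" using gb mu k by (simp add: a_def)
  have X1: "X \<ge> 1" using a0 s by (simp add: X_def)
  have y: "0 < y" "y \<le> 1" using X1 by (auto simp: y_def)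
  have mk0: "0 \<le> \<mu> * \<kappa>" using k mu by simp
  have c: "0 \<le> c" "c < 1" using mk0 m by (auto simp: c_def divide_less_eq)
  have cy: "\<bar>- (c * y)\<bar> < 1"
  proof -
    have "c * y \<le> c" using c y by (simp add: mult_left_le)
    then show ?thesis using c y by auto
  qed
  have bin: "(\<lambda>n. (- m gchoose n) * (- (c * y)) ^ n) sums (1 + - (c * y)) powr (- m)"
    by (rule gen_binomial_real[OF cy])
  have gch: "(- m gchoose n) * (- (c * y)) ^ n = pochhammer m n / fact n * c ^ n * y ^ n" for n
  proof -
    have A: "(- m gchoose n) = (-1) ^ n * (pochhammer m n / fact n)"
      by (simp add: gbinomial_pochhammer)
    have B: "(- (c * y)) ^ n = (-1) ^ n * (c ^ n * y ^ n)"
      by (subst power_minus) (simp only: power_mult_distrib)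
    have D: "((-1::real) ^ n * (-1) ^ n) = 1"
      by (simp only: power_mult_distrib[symmetric]) simp
    have "(- m gchoose n) * (- (c * y)) ^ n = ((-1) ^ n * (-1) ^ n) * (pochhammer m n / fact n * c ^ n * y ^ n)"
      unfolding A B by (simp only: mult.assoc mult.commute mult.left_commute)
    then show ?thesis unfolding D by simp
  qed
  have bin2: "(\<lambda>n. pochhammer m n / fact n * c ^ n * y ^ n) sums (1 - c * y) powr (- m)"
    using bin unfolding gch by simp
  define C where "C = (m / (m + \<mu> * \<kappa>)) powr m * X powr (- \<mu>)"
  have trm: "pk \<kappa> \<mu> m i * (1 + gb / (\<mu> * (1 + \<kappa>)) * s) powr (- (\<mu> + real i))
      = C * (pochhammer m i / fact i * c ^ i * y ^ i)" for i
  proof -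
    have "X powr (- (\<mu> + real i)) = X powr (- \<mu>) * X powr (- real i)"
      by (simp add: powr_add[symmetric])
    also have "X powr (- real i) = y ^ i"
      using X1 by (simp add: y_def powr_minus powr_realpow power_one_over inverse_eq_divide)
    finally have "X powr (- (\<mu> + real i)) = X powr (- \<mu>) * y ^ i" .
    moreover have "1 + gb / (\<mu> * (1 + \<kappa>)) * s = X" by (simp add: X_def a_def)
    ultimately show ?thesis unfolding pk_def C_def c_def
      by (simp only: mult.assoc mult.commute mult.left_commute)
  qed
  have "(\<lambda>i. pk \<kappa> \<mu> m i * (1 + gb / (\<mu> * (1 + \<kappa>)) * s) powr (- (\<mu> + real i))) sums (C * (1 - c * y) powr (- m))"
    unfolding trm by (rule sums_mult[OF bin2])
  also have "C * (1 - c * y) powr (- m) = kms_mgf \<kappa> \<mu> m gb (- s)"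
  proof -
    have mk: "m + \<mu> * \<kappa> > 0" using m mu k by (simp add: add_pos_nonneg)
    have e1: "1 - gb * (- s) / (\<mu> * (1 + \<kappa>)) = X" by (simp add: X_def a_def)
    have Xp: "X > 0" using X1 by simp
    have "X * ((m + \<mu> * \<kappa>) / m) * (1 - c * y) = X * ((m + \<mu> * \<kappa>) / m) - \<mu> * \<kappa> / m"
    proof -
      have Xy: "X * y = 1" using Xp by (simp add: y_def)
      have cm: "c * ((m + \<mu> * \<kappa>) / m) = \<mu> * \<kappa> / m" using mk m by (simp add: c_def)
      have "X * ((m + \<mu> * \<kappa>) / m) * (1 - c * y) = X * ((m + \<mu> * \<kappa>) / m) - (X * y) * (c * ((m + \<mu> * \<kappa>) / m))"
        using ring_aux by blast
      then show ?thesis unfolding Xy cm by simp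
    qed
    also have "\<dots> = 1 + (\<mu> * \<kappa> + m) * gb * s / (m * \<mu> * (1 + \<kappa>))"
    proof -
      have k1: "\<mu> + \<kappa> * \<mu> > 0" "\<mu> * m + \<kappa> * (\<mu> * m) > 0" using mu k m by (auto intro: add_pos_nonneg)
      have r1: "(1 + A) * ((m + k) / m) - k / m = 1 + (k + m) * A / m" for A k :: real
        using m by (simp add: field_simps)
      have r2: "(\<mu> * \<kappa> + m) * gb * s / (m * \<mu> * (1 + \<kappa>)) = (\<mu> * \<kappa> + m) * (a * s) / m"
        by (simp add: a_def mult_ac)
      show ?thesis unfolding X_def r2 r1 ..
    qed
    finally have e2: "1 - (\<mu> * \<kappa> + m) * gb * (- s) / (m * \<mu> * (1 + \<kappa>)) = X * ((m + \<mu> * \<kappa>) / m) * (1 - c * y)"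
      by simp
    have p1: "(1 - c * y) > 0" using cy by auto
    have "kms_mgf \<kappa> \<mu> m gb (- s) = X powr (m - \<mu>) * (X * ((m + \<mu> * \<kappa>) / m) * (1 - c * y)) powr (- m)"
      unfolding kms_mgf_def e1 e2 ..
    also have "\<dots> = X powr (m - \<mu>) * X powr (- m) * ((m + \<mu> * \<kappa>) / m) powr (- m) * (1 - c * y) powr (- m)"
      using powr_mult3[of X "(m + \<mu> * \<kappa>) / m" "1 - c * y" "- m"] X1 p1 mk m by (simp add: mult.assoc)
    also have "\<dots> = C * (1 - c * y) powr (- m)"
    proof -
      have h1: "X powr (m - \<mu>) * X powr (- m) = X powr (- \<mu>)" by (simp add: powr_add[symmetric])
      have h2: "((m + \<mu> * \<kappa>) / m) powr (- m) = (m / (m + \<mu> * \<kappa>)) powr m"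
        using mk m by (simp add: powr_divide powr_minus_divide)
      show ?thesis unfolding h1 h2 C_def by (simp only: mult.assoc mult.commute mult.left_commute)
    qed
    finally show ?thesis ..
  qed
  finally show ?thesis .
qed

lemma pk_sums_1:
  assumes k: "\<kappa> \<ge> 0" and mu: "\<mu> > 0" and m: "m > 0"
  shows "pk \<kappa> \<mu> m sums 1"
  using kms_series[OF k mu m zero_less_one order_refl] by (simp add: kms_mgf_def)


lemma gamma_E:
  fixes lam z :: real assumes lam: "lam > 0" and z: "z > 0"
  shows "(\<integral>\<^sup>+t. ennreal (indicator {0<..} t * (z powr lam / Gamma lam) * t powr (lam - 1) * exp (- z * t) * ln (1 + t)) \<partial>lborel)
       = (\<integral>\<^sup>+s. ennreal (indicator {0<..} s * exp (- s) * (1 - (1 + s / z) powr (- lam)) / s) \<partial>lborel)"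
proof -
  define d where "d t = ennreal (indicator {0<..} t * (z powr lam / Gamma lam) * t powr (lam - 1) * exp (- z * t))" for t
  define P where "P = density lborel d"
  have Gp: "Gamma lam > 0" using lam by (rule Gamma_real_pos)
  have dm[measurable]: "d \<in> borel_measurable borel" unfolding d_def by measurable
  have sP[measurable_cong]: "sets P = sets borel" by (simp add: P_def)
  have lap_nn: "(\<integral>\<^sup>+x. ennreal (exp (- s * x)) \<partial>P) = ennreal ((1 + s / z) powr (- lam))" if s: "s \<ge> 0" for s
  proof -
    have "(\<integral>\<^sup>+x. ennreal (exp (- s * x)) \<partial>P) = (\<integral>\<^sup>+x. d x * ennreal (exp (- s * x)) \<partial>lborel)"
      unfolding P_def by (subst nn_integral_density) auto
    also have "\<dots> = (\<integral>\<^sup>+x. ennreal (z powr lam / Gamma lam) * ennreal (indicator {0<..} x * x powr (lam - 1) * exp (- (z + s) * x)) \<partial>lborel)"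
      by (intro nn_integral_cong) (use Gp z in \<open>auto simp: d_def ennreal_mult'[symmetric] indicator_def algebra_simps exp_add[symmetric]\<close>)
    also have "\<dots> = ennreal (z powr lam / Gamma lam) * ennreal (Gamma lam / (z + s) powr lam)"
      by (subst nn_integral_cmult) (use gamma_nn[OF lam, of "z + s"] z s in auto)
    also have "\<dots> = ennreal ((1 + s / z) powr (- lam))"
    proof -
      have "z powr lam / Gamma lam * (Gamma lam / (z + s) powr lam) = (z / (z + s)) powr lam"
        using Gp z s by (simp add: powr_divide)
      also have "\<dots> = (1 + s / z) powr (- lam)"
      proof -
        have "z / (z + s) = inverse (1 + s / z)" using z s by (simp add: field_simps)
        then show ?thesis using z s by (simp add: inverse_powr powr_minus) 
      qed
      finally show ?thesis using Gp z s by (simp add: ennreal_mult'[symmetric])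
    qed
    finally show ?thesis .
  qed
  have PP: "prob_space P"
  proof
    have "emeasure P (space P) = (\<integral>\<^sup>+x. ennreal (exp (- 0 * x)) \<partial>P)"
      by simp
    also have "\<dots> = 1" using lap_nn[of 0] by simp
    finally show "emeasure P (space P) = 1" .
  qed
  have pos: "AE x in P. 0 \<le> x"
    unfolding P_def by (subst AE_density) (auto simp: d_def indicator_def)
  have lap: "(\<integral>x. exp (- s * x) \<partial>P) = (1 + s / z) powr (- lam)" if s: "s \<ge> 0" for s
  proof -
    interpret prob_space P by (rule PP)
    have ie: "integrable P (\<lambda>x. exp (- s * x))"
      apply (rule integrable_const_bound[where B=1])
      using pos s apply (auto elim!: eventually_mono simp: mult_nonneg_nonneg)
      done
    have "ennreal (\<integral>x. exp (- s * x) \<partial>P) = ennreal ((1 + s / z) powr (- lam))"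
      using lap_nn[OF s] nn_integral_eq_integral[OF ie] by simp
    then show ?thesis using s z by (subst (asm) ennreal_inj) auto
  qed
  have "(\<integral>\<^sup>+t. ennreal (indicator {0<..} t * (z powr lam / Gamma lam) * t powr (lam - 1) * exp (- z * t) * ln (1 + t)) \<partial>lborel)
      = (\<integral>\<^sup>+t. d t * ennreal (ln (1 + t)) \<partial>lborel)"
  proof (intro nn_integral_cong)
    fix t :: real
    show "ennreal (indicator {0<..} t * (z powr lam / Gamma lam) * t powr (lam - 1) * exp (- z * t) * ln (1 + t)) = d t * ennreal (ln (1 + t))"
      unfolding d_def using Gp by (subst ennreal_mult'[symmetric]) (auto simp: indicator_def)
  qed
  also have "\<dots> = (\<integral>\<^sup>+t. ennreal (ln (1 + t)) \<partial>P)"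
    unfolding P_def by (subst nn_integral_density) auto
  also have "\<dots> = (\<integral>\<^sup>+s. ennreal (indicator {0<..} s * exp (- s) * (1 - (\<integral>x. exp (- s * x) \<partial>P)) / s) \<partial>lborel)"
    by (rule ln_laplace[OF PP sP pos])
  also have "\<dots> = (\<integral>\<^sup>+s. ennreal (indicator {0<..} s * exp (- s) * (1 - (1 + s / z) powr (- lam)) / s) \<partial>lborel)"
  proof (intro nn_integral_cong)
    fix s :: real
    show "ennreal (indicator {0<..} s * exp (- s) * (1 - (\<integral>x. exp (- s * x) \<partial>P)) / s) = ennreal (indicator {0<..} s * exp (- s) * (1 - (1 + s / z) powr (- lam)) / s)"
      using lap[of s] by (cases "s > 0") (auto simp: indicator_def)
  qed
  finally show ?thesis .
qed


lemma ennreal_sums_real: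
  fixes A :: "nat \<Rightarrow> ennreal"
  assumes fin: "(\<Sum>k. A k) \<noteq> \<infinity>"
  shows "(\<lambda>k. enn2real (A k)) sums enn2real (\<Sum>k. A k)"
proof -
  have Ak: "A k \<noteq> \<infinity>" for k
    using ennreal_suminf_lessD[of A \<infinity> k] fin by (auto simp: top_unique less_top)
  have eq: "(\<Sum>k. ennreal (enn2real (A k))) = (\<Sum>k. A k)"
    using Ak by (simp add: ennreal_enn2real_if)
  have sm: "summable (\<lambda>k. enn2real (A k))"
    by (rule summable_suminf_not_top) (use eq fin in auto)
  have "ennreal (\<Sum>k. enn2real (A k)) = (\<Sum>k. A k)"
    using suminf_ennreal2[of "\<lambda>k. enn2real (A k)", OF _ sm] eq by simp
  then have "(\<Sum>k. enn2real (A k)) = enn2real (\<Sum>k. A k)"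
    by (metis enn2real_ennreal enn2real_nonneg suminf_nonneg sm)
  with sm show ?thesis using summable_sums by fastforce
qed

lemma ln_series_pos:
  fixes t :: real assumes "t \<ge> 0"
  shows "(\<lambda>k. (t / (1 + t)) ^ Suc k / real (Suc k)) sums ln (1 + t)"
proof -
  define y where "y = t / (1 + t)"
  have y: "0 \<le> y" "y < 1" using assms by (auto simp: y_def)
  have "(\<lambda>n. - ((- (- y)) ^ n) / of_nat n) sums ln (1 + - y)"
    by (rule ln_series') (use y in auto)
  then have "(\<lambda>n. - (y ^ n / real n)) sums ln (1 - y)" by simp
  then have "(\<lambda>n. y ^ n / real n) sums (- ln (1 - y))"
    using sums_minus by fastforce
  moreover have "- ln (1 - y) = ln (1 + t)"
  proof -
    have "1 - y = inverse (1 + t)" using assms by (simp add: y_def field_simps)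
    then show ?thesis using assms by (simp add: ln_inverse)
  qed
  ultimately have "(\<lambda>n. y ^ n / real n) sums ln (1 + t)" by simp
  then show ?thesis unfolding y_def[symmetric] by (subst sums_Suc_iff) simp
qed

lemma kummer_term:
  fixes lam z :: real and k :: nat assumes lam: "lam > 0" and z: "z > 0"
  shows "1 / real (Suc k) * Gamma (real (Suc k) + lam) * kummerU (real (Suc k) + lam) (1 + lam) z
       = enn2real (\<integral>\<^sup>+t. ennreal (indicator {0<..} t * exp (- z * t) * t powr (lam - 1) * ((t / (1 + t)) ^ Suc k / real (Suc k))) \<partial>lborel)"
proof -
  define a where "a = real (Suc k) + lam"
  have a: "a > 0" using lam by (simp add: a_def)
  have Ga: "Gamma a \<noteq> 0" using Gamma_real_pos[OF a] by simp
  have "Gamma a * kummerU a (1 + lam) z = (LINT t:{0<..}|lborel. exp (- z * t) * t powr (a - 1) * (1 + t) powr (1 + lam - a - 1))"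
    using Ga by (simp add: kummerU_def)
  also have "\<dots> = enn2real (\<integral>\<^sup>+t. ennreal (indicator {0<..} t * (exp (- z * t) * t powr (a - 1) * (1 + t) powr (1 + lam - a - 1))) \<partial>lborel)"
    unfolding set_lebesgue_integral_def
    by (subst integral_eq_nn_integral) (auto simp: indicator_def)
  finally have "1 / real (Suc k) * (Gamma a * kummerU a (1 + lam) z) = 1 / real (Suc k) * enn2real (\<integral>\<^sup>+t. ennreal (indicator {0<..} t * (exp (- z * t) * t powr (a - 1) * (1 + t) powr (1 + lam - a - 1))) \<partial>lborel)"
    by simp
  also have "\<dots> = enn2real (ennreal (1 / real (Suc k)) * (\<integral>\<^sup>+t. ennreal (indicator {0<..} t * (exp (- z * t) * t powr (a - 1) * (1 + t) powr (1 + lam - a - 1))) \<partial>lborel))"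
    by (simp add: enn2real_mult)
  also have "\<dots> = enn2real (\<integral>\<^sup>+t. ennreal (indicator {0<..} t * exp (- z * t) * t powr (lam - 1) * ((t / (1 + t)) ^ Suc k / real (Suc k))) \<partial>lborel)"
  proof -
    have "ennreal (1 / real (Suc k)) * ennreal (indicator {0<..} t * (exp (- z * t) * t powr (a - 1) * (1 + t) powr (1 + lam - a - 1)))
        = ennreal (indicator {0<..} t * exp (- z * t) * t powr (lam - 1) * ((t / (1 + t)) ^ Suc k / real (Suc k)))" for t
    proof (cases "t > 0")
      case True
      have e1: "t powr (a - 1) = t powr (lam - 1) * t ^ Suc k"
      proof -
        have "a - 1 = (lam - 1) + real (Suc k)" by (simp add: a_def)
        then have "t powr (a - 1) = t powr (lam - 1) * t powr real (Suc k)" by (simp only: powr_add)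
        then show ?thesis using True by (simp only: powr_realpow)
      qed
      have e2: "(1 + t) powr (1 + lam - a - 1) = 1 / (1 + t) ^ Suc k"
      proof -
        have "1 + lam - a - 1 = - real (Suc k)" by (simp add: a_def)
        then have "(1 + t) powr (1 + lam - a - 1) = 1 / (1 + t) powr real (Suc k)" by (simp only: powr_minus_divide)
        then show ?thesis using True by (simp only: powr_realpow)
      qed
      show ?thesis using True unfolding e1 e2
        by (simp add: ennreal_mult'[symmetric] power_divide field_simps)
    qed (simp add: indicator_def)
    then show ?thesis by (subst nn_integral_cmult[symmetric]) auto
  qed
  finally show ?thesis by (simp add: a_def mult.assoc)
qed

lemma kummer_series:
  fixes lam z :: real assumes lam: "lam > 0" and z: "z > 0"
    and fin: "(\<integral>\<^sup>+t. ennreal (indicator {0<..} t * exp (- z * t) * t powr (lam - 1) * ln (1 + t)) \<partial>lborel) \<noteq> \<infinity>"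
  shows "(\<lambda>k. 1 / real (Suc k) * Gamma (real (Suc k) + lam) * kummerU (real (Suc k) + lam) (1 + lam) z)
          sums enn2real (\<integral>\<^sup>+t. ennreal (indicator {0<..} t * exp (- z * t) * t powr (lam - 1) * ln (1 + t)) \<partial>lborel)"
proof -
  define A where "A k = (\<integral>\<^sup>+t. ennreal (indicator {0<..} t * exp (- z * t) * t powr (lam - 1) * ((t / (1 + t)) ^ Suc k / real (Suc k))) \<partial>lborel)" for k
  have "(\<Sum>k. A k) = (\<integral>\<^sup>+t. (\<Sum>k. ennreal (indicator {0<..} t * exp (- z * t) * t powr (lam - 1) * ((t / (1 + t)) ^ Suc k / real (Suc k)))) \<partial>lborel)"
    unfolding A_def by (rule nn_integral_suminf[symmetric]) measurable
  also have "\<dots> = (\<integral>\<^sup>+t. ennreal (indicator {0<..} t * exp (- z * t) * t powr (lam - 1) * ln (1 + t)) \<partial>lborel)"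
  proof (intro nn_integral_cong)
    fix t :: real
    show "(\<Sum>k. ennreal (indicator {0<..} t * exp (- z * t) * t powr (lam - 1) * ((t / (1 + t)) ^ Suc k / real (Suc k))))
        = ennreal (indicator {0<..} t * exp (- z * t) * t powr (lam - 1) * ln (1 + t))"
    proof (cases "t > 0")
      case True
      have "(\<lambda>k. indicator {0<..} t * exp (- z * t) * t powr (lam - 1) * ((t / (1 + t)) ^ Suc k / real (Suc k)))
          sums (indicator {0<..} t * exp (- z * t) * t powr (lam - 1) * ln (1 + t))"
        by (rule sums_mult[OF ln_series_pos]) (use True in simp)
      then show ?thesis
        using True by (subst sums_unique[symmetric]) (auto simp: sums_ennreal)
    qed (simp add: indicator_def)
  qed
  finally have S: "(\<Sum>k. A k) = (\<integral>\<^sup>+t. ennreal (indicator {0<..} t * exp (- z * t) * t powr (lam - 1) * ln (1 + t)) \<partial>lborel)" .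
  have "(\<lambda>k. enn2real (A k)) sums enn2real (\<Sum>k. A k)"
    by (rule ennreal_sums_real) (use S fin in simp)
  then show ?thesis unfolding S unfolding A_def kummer_term[OF lam z, symmetric] .
qed


lemma subst_cos:
  fixes h :: "real \<Rightarrow> real"
  assumes hm[measurable]: "h \<in> borel_measurable borel"
  shows "(\<integral>\<^sup>+\<theta>. ennreal (indicator {0..pi} \<theta> * h (1 + cos \<theta>)) \<partial>lborel)
       = (\<integral>\<^sup>+t. ennreal (indicator {0..1} t * (h (2 * t) * t powr (-1/2) * (1 - t) powr (-1/2))) \<partial>lborel)"
proof -
  define f where "f t = h (2 * (1 - t)) * t powr (-1/2) * (1 - t) powr (-1/2)" for t :: real
  define g where "g \<theta> = (1 - cos \<theta>) / 2" for \<theta> :: real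
  define g' where "g' \<theta> = sin \<theta> / 2" for \<theta> :: real
  have fm[measurable]: "f \<in> borel_measurable borel" unfolding f_def by measurable
  have g0: "g 0 = 0" and gpi: "g pi = 1" by (simp_all add: g_def)
  have "(\<integral>\<^sup>+t. ennreal (f t * indicator {g 0..g pi} t) \<partial>lborel)
      = (\<integral>\<^sup>+\<theta>. ennreal (f (g \<theta>) * g' \<theta> * indicator {0..pi} \<theta>) \<partial>lborel)"
  proof (rule nn_integral_substitution)
    show "set_borel_measurable borel {g 0..g pi} f" unfolding set_borel_measurable_def by measurable
    show "(g has_real_derivative g' x) (at x)" for x
      unfolding g_def g'_def by (auto intro!: derivative_eq_intros)
    show "continuous_on {0..pi} g'" unfolding g'_def by (intro continuous_intros) auto
    show "0 \<le> g' x" if "x \<in> {0..pi}" for x using that sin_ge_zero by (auto simp: g'_def)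
  qed simp
  also have "\<dots> = (\<integral>\<^sup>+\<theta>. ennreal (indicator {0..pi} \<theta> * h (1 + cos \<theta>)) \<partial>lborel)"
  proof (rule nn_integral_cong_AE)
    have "AE \<theta> in lborel. \<theta> \<noteq> 0 \<and> \<theta> \<noteq> pi"
      using AE_lborel_singleton[of 0] AE_lborel_singleton[of pi] by eventually_elim auto
    then show "AE \<theta> in lborel. ennreal (f (g \<theta>) * g' \<theta> * indicator {0..pi} \<theta>) = ennreal (indicator {0..pi} \<theta> * h (1 + cos \<theta>))"
    proof eventually_elim
      case (elim \<theta>)
      show ?case
      proof (cases "\<theta> \<in> {0..pi}")
        case True
        then have th: "0 < \<theta>" "\<theta> < pi" using elim by auto
        have s: "sin \<theta> > 0" using sin_gt_zero[OF th] .
        have t1: "g \<theta> * (1 - g \<theta>) = (sin \<theta> / 2) ^ 2"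
        proof -
          have "g \<theta> * (1 - g \<theta>) = (1 - cos \<theta> ^ 2) / 4" by (simp add: g_def field_simps power2_eq_square)
          also have "\<dots> = (sin \<theta> / 2) ^ 2"
            by (simp add: power_divide field_simps) (use sin_cos_squared_add[of \<theta>] in linarith)
          finally show ?thesis .
        qed
        have gp: "g \<theta> > 0" "1 - g \<theta> > 0"
        proof -
          have "sin \<theta> ^ 2 > 0" using s by simp
          then have "cos \<theta> ^ 2 < 1" using sin_cos_squared_add[of \<theta>] by linarith
          then have "\<bar>cos \<theta>\<bar> < 1" by (simp add: abs_square_less_1)
          then show "g \<theta> > 0" "1 - g \<theta> > 0" by (auto simp: g_def)
        qed
        have "g \<theta> powr (-1/2) * (1 - g \<theta>) powr (-1/2) = (g \<theta> * (1 - g \<theta>)) powr (-1/2)"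
          using gp by (simp add: powr_mult)
        also have "\<dots> = ((sin \<theta> / 2) ^ 2) powr (-1/2)" by (simp add: t1)
        also have "\<dots> = (sin \<theta> / 2) powr (- 1)"
        proof -
          have "(sin \<theta> / 2) ^ 2 = (sin \<theta> / 2) powr 2" using s by (simp add: powr_numeral)
          then show ?thesis by (simp add: powr_powr)
        qed
        also have "\<dots> = 1 / g' \<theta>" using s by (simp add: g'_def powr_minus_divide)
        finally have pp: "g \<theta> powr (-1/2) * (1 - g \<theta>) powr (-1/2) = 1 / g' \<theta>" .
        have hh: "2 * (1 - g \<theta>) = 1 + cos \<theta>" by (simp add: g_def field_simps)
        have "f (g \<theta>) * g' \<theta> = h (1 + cos \<theta>) * (g \<theta> powr (-1/2) * (1 - g \<theta>) powr (-1/2)) * g' \<theta>"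
          unfolding f_def hh by (simp only: mult.assoc mult.commute mult.left_commute)
        also have "\<dots> = h (1 + cos \<theta>)" unfolding pp using s by (simp add: g'_def)
        finally show ?thesis using True by simp
      qed simp
    qed
  qed
  finally have L: "(\<integral>\<^sup>+\<theta>. ennreal (indicator {0..pi} \<theta> * h (1 + cos \<theta>)) \<partial>lborel) = (\<integral>\<^sup>+t. ennreal (f t * indicator {0..1} t) \<partial>lborel)"
    by (simp add: g0 gpi)
  also have "\<dots> = ennreal \<bar>- 1\<bar> * (\<integral>\<^sup>+t. ennreal (f (1 + (- 1) * t) * indicator {0..1} (1 + (- 1) * t)) \<partial>lborel)"
    by (rule nn_integral_real_affine) auto
  also have "\<dots> = (\<integral>\<^sup>+t. ennreal (indicator {0..1} t * (h (2 * t) * t powr (-1/2) * (1 - t) powr (-1/2))) \<partial>lborel)"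
  proof -
    have i: "indicator {0..1} (1 + (- 1) * t) = (indicator {0..1} t :: real)" for t :: real by (auto simp: indicator_def algebra_simps)
    have e: "f (1 + (- 1) * t) = h (2 * t) * t powr (-1/2) * (1 - t) powr (-1/2)" for t :: real
      unfolding f_def by (simp add: mult_ac)
    have "(\<integral>\<^sup>+t. ennreal (f (1 + (- 1) * t) * indicator {0..1} (1 + (- 1) * t)) \<partial>lborel) = (\<integral>\<^sup>+t. ennreal (indicator {0..1} t * (h (2 * t) * t powr (-1/2) * (1 - t) powr (-1/2))) \<partial>lborel)"
      unfolding i e by (simp add: mult.commute)
    then show ?thesis by simp
  qed
  finally show ?thesis .
qed


lemma pk_expand:
  fixes K \<Delta> m \<mu> \<theta> :: real and i :: nat
  assumes K: "K > 0" and D0: "0 \<le> \<Delta>" and D1: "\<Delta> < 1" and m: "m > 0" and mu: "\<mu> > 0"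
  shows "pk (K * (1 + \<Delta> * cos \<theta>)) \<mu> m i =
    (\<Sum>q\<le>i. (Gamma (m + real i) * (\<mu> * K) ^ i * m powr m / (Gamma m * Gamma (real i + 1)) *
               (real (i choose q) * \<Delta> ^ q * (1 - \<Delta>) ^ (i - q))) *
             ((1 + cos \<theta>) ^ q * (\<mu> * K * (1 - \<Delta>) + m + \<mu> * K * \<Delta> * (1 + cos \<theta>)) powr (- (m + real i))))"
proof -
  define \<kappa> where "\<kappa> = K * (1 + \<Delta> * cos \<theta>)"
  define S where "S = m + \<mu> * \<kappa>"
  define Cst where "Cst = Gamma (m + real i) * (\<mu> * K) ^ i * m powr m / (Gamma m * Gamma (real i + 1))"
  have c1: "1 + \<Delta> * cos \<theta> > 0"
  proof -
    have "\<Delta> * cos \<theta> \<ge> - \<Delta>" using mult_left_mono[OF cos_ge_minus_one[of \<theta>] D0] by simp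
    then show ?thesis using D1 by linarith
  qed
  have k0: "\<kappa> > 0" using K c1 by (simp add: \<kappa>_def)
  have S0: "S > 0" using m mu k0 by (simp add: S_def add_pos_pos)
  have mZ: "m \<notin> \<int>\<^sub>\<le>\<^sub>0" using m by (auto elim!: nonpos_Ints_cases)
  have poch: "pochhammer m i / fact i = Gamma (m + real i) / (Gamma m * Gamma (real i + 1))"
  proof -
    have gf: "Gamma (1 + real i) = fact i" by (rule Gamma_fact)
    show ?thesis using pochhammer_Gamma[OF mZ, of i] gf by (simp add: add.commute)
  qed
  have "pk \<kappa> \<mu> m i = m powr m / S powr m * (pochhammer m i / fact i) * ((\<mu> * \<kappa>) ^ i / S powr real i)"
    using S0 m by (simp add: pk_def S_def[symmetric] powr_divide power_divide powr_realpow)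
  also have "\<dots> = m powr m * (pochhammer m i / fact i) * (\<mu> * \<kappa>) ^ i * S powr (- (m + real i))"
  proof -
    have "S powr (- (m + real i)) = S powr (- m) * S powr (- real i)"
      by (simp only: minus_add_distrib powr_add)
    then have "S powr (- (m + real i)) = inverse (S powr m) * inverse (S powr real i)"
      by (simp only: powr_minus)
    then show ?thesis by (simp add: divide_inverse mult_ac)
  qed
  also have "(\<mu> * \<kappa>) ^ i = (\<mu> * K) ^ i * (\<Delta> * (1 + cos \<theta>) + (1 - \<Delta>)) ^ i"
  proof -
    have "\<mu> * \<kappa> = (\<mu> * K) * (\<Delta> * (1 + cos \<theta>) + (1 - \<Delta>))"
      by (simp add: \<kappa>_def algebra_simps)
    then show ?thesis by (simp only: power_mult_distrib)
  qed
  also have "(\<Delta> * (1 + cos \<theta>) + (1 - \<Delta>)) ^ i = (\<Sum>q\<le>i. real (i choose q) * (\<Delta> * (1 + cos \<theta>)) ^ q * (1 - \<Delta>) ^ (i - q))"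
    by (rule binomial_ring)
  also have "S = \<mu> * K * (1 - \<Delta>) + m + \<mu> * K * \<Delta> * (1 + cos \<theta>)"
    by (simp add: S_def \<kappa>_def algebra_simps)
  finally have "pk \<kappa> \<mu> m i = Cst * (\<Sum>q\<le>i. real (i choose q) * (\<Delta> * (1 + cos \<theta>)) ^ q * (1 - \<Delta>) ^ (i - q)) *
      (\<mu> * K * (1 - \<Delta>) + m + \<mu> * K * \<Delta> * (1 + cos \<theta>)) powr (- (m + real i))"
    unfolding poch Cst_def by (simp add: mult_ac)
  also have "\<dots> = (\<Sum>q\<le>i. (Cst * (real (i choose q) * \<Delta> ^ q * (1 - \<Delta>) ^ (i - q))) *
             ((1 + cos \<theta>) ^ q * (\<mu> * K * (1 - \<Delta>) + m + \<mu> * K * \<Delta> * (1 + cos \<theta>)) powr (- (m + real i))))"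
    by (simp add: sum_distrib_left sum_distrib_right power_mult_distrib mult_ac)
  finally show ?thesis by (simp add: \<kappa>_def Cst_def)
qed


lemma alg_aux:
  fixes Cst Pi s Dq C G1 G2 Xq L Dl Pm T p :: real
  assumes "G1 \<noteq> 0" "G2 \<noteq> 0" "s \<noteq> 0" "Dq \<noteq> 0" "s * s = p" "Pi * Xq = Pm * T * Dl"
  shows "Cst * (Pi / (s * Dq)) * (C * G1 / G2 * Xq * (G2 / (G1 * s) * L)) = Cst * (C * Dl * Pm) / p * (T * (1 / Dq)) * L"
proof -
  have "Cst * (Pi / (s * Dq)) * (C * G1 / G2 * Xq * (G2 / (G1 * s) * L)) = Cst * C * L * (Pi * Xq) / ((s * s) * Dq)"
    using assms(1-4) by (simp add: field_simps)
  also have "\<dots> = Cst * (C * Dl * Pm) / p * (T * (1 / Dq)) * L"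
    unfolding assms(5,6) by (simp add: field_simps)
  finally show ?thesis .
qed

lemma w_integral:
  fixes K \<Delta> m \<mu> :: real and i :: nat
  assumes K: "K > 0" and D0: "0 \<le> \<Delta>" and D1: "\<Delta> < 1" and m: "m > 0" and mu: "\<mu> > 0"
  shows "(\<integral>\<^sup>+\<theta>. ennreal (indicator {0..pi} \<theta> / pi) * ennreal (pk (K * (1 + \<Delta> * cos \<theta>)) \<mu> m i) \<partial>lborel)
       = ennreal (mftr_w K \<Delta> m \<mu> i)"
proof -
  define e where "e = m + real i"
  define D where "D = \<mu> * K * (1 - \<Delta>) + m"
  define B where "B = \<mu> * K * \<Delta>"
  define z where "z = - 2 * \<mu> * K * \<Delta> / (\<mu> * K * (1 - \<Delta>) + m)"
  define Cst where "Cst = Gamma (m + real i) * (\<mu> * K) ^ i * m powr m / (Gamma m * Gamma (real i + 1))"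
  define c where "c q = Cst * (real (i choose q) * \<Delta> ^ q * (1 - \<Delta>) ^ (i - q))" for q
  define h where "h q u = u ^ q * (D + B * u) powr (- e)" for q :: nat and u :: real
  define E where "E q t = t powr (real q + 1/2 - 1) * (1 - t) powr (real q + 1 - (real q + 1/2) - 1) * (1 - z * t) powr (- (m + real i))" for q :: nat and t :: real
  define L where "L q = (LINT t:{0<..<1}|lborel. E q t)" for q
  have e0: "e > 0" using m by (simp add: e_def)
  have Dp: "D > 0" using mu K D1 m by (simp add: D_def add_pos_nonneg)
  have B0: "B \<ge> 0" using mu K D0 by (simp add: B_def)
  have z0: "z \<le> 0" using mu K D0 Dp by (simp add: z_def D_def[symmetric] divide_nonpos_pos)
  have Gm: "Gamma m > 0" using m by (rule Gamma_real_pos)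
  have Cst0: "Cst \<ge> 0" using Gm m mu K
    by (simp add: Cst_def Gamma_real_pos)
  have c0: "c q \<ge> 0" for q using Cst0 D0 D1 by (simp add: c_def)
  have hm[measurable]: "h q \<in> borel_measurable borel" for q unfolding h_def by measurable
  have h0: "h q u \<ge> 0" if "u \<ge> 0" for q u using that by (simp add: h_def)
  have "(\<integral>\<^sup>+\<theta>. ennreal (indicator {0..pi} \<theta> / pi) * ennreal (pk (K * (1 + \<Delta> * cos \<theta>)) \<mu> m i) \<partial>lborel)
      = (\<integral>\<^sup>+\<theta>. (\<Sum>q\<le>i. ennreal (c q / pi) * ennreal (indicator {0..pi} \<theta> * h q (1 + cos \<theta>))) \<partial>lborel)"
  proof (intro nn_integral_cong)
    fix \<theta> :: real
    have "pk (K * (1 + \<Delta> * cos \<theta>)) \<mu> m i = (\<Sum>q\<le>i. c q * h q (1 + cos \<theta>))"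
      unfolding pk_expand[OF K D0 D1 m mu] c_def Cst_def h_def D_def B_def e_def by (simp add: mult_ac)
    then have "ennreal (indicator {0..pi} \<theta> / pi) * ennreal (pk (K * (1 + \<Delta> * cos \<theta>)) \<mu> m i)
        = ennreal (\<Sum>q\<le>i. c q / pi * (indicator {0..pi} \<theta> * h q (1 + cos \<theta>)))"
      by (simp add: ennreal_mult'[symmetric] sum_distrib_left mult_ac)
    also have "\<dots> = (\<Sum>q\<le>i. ennreal (c q / pi * (indicator {0..pi} \<theta> * h q (1 + cos \<theta>))))"
    proof (rule sum_ennreal[symmetric])
      fix q
      have "h q (1 + cos \<theta>) \<ge> 0" by (rule h0) (use cos_ge_minus_one[of \<theta>] in linarith)
      then show "0 \<le> c q / pi * (indicator {0..pi} \<theta> * h q (1 + cos \<theta>))" using c0[of q] by simp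
    qed
    also have "\<dots> = (\<Sum>q\<le>i. ennreal (c q / pi) * ennreal (indicator {0..pi} \<theta> * h q (1 + cos \<theta>)))"
    proof (intro sum.cong refl)
      fix q
      show "ennreal (c q / pi * (indicator {0..pi} \<theta> * h q (1 + cos \<theta>))) = ennreal (c q / pi) * ennreal (indicator {0..pi} \<theta> * h q (1 + cos \<theta>))"
        by (rule ennreal_mult') (use c0[of q] in simp)
    qed
    finally show "ennreal (indicator {0..pi} \<theta> / pi) * ennreal (pk (K * (1 + \<Delta> * cos \<theta>)) \<mu> m i)
        = (\<Sum>q\<le>i. ennreal (c q / pi) * ennreal (indicator {0..pi} \<theta> * h q (1 + cos \<theta>)))" .
  qed
  also have "\<dots> = (\<Sum>q\<le>i. ennreal (c q / pi) * (\<integral>\<^sup>+\<theta>. ennreal (indicator {0..pi} \<theta> * h q (1 + cos \<theta>)) \<partial>lborel))"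
    by (subst nn_integral_sum) (auto simp: nn_integral_cmult)
  also have "\<dots> = (\<Sum>q\<le>i. ennreal (c q / pi * (2 ^ q * D powr (- e)) * L q))"
  proof (intro sum.cong refl)
    fix q assume "q \<in> {..i}"
    have sub: "(\<integral>\<^sup>+\<theta>. ennreal (indicator {0..pi} \<theta> * h q (1 + cos \<theta>)) \<partial>lborel)
        = (\<integral>\<^sup>+t. ennreal (indicator {0..1} t * (h q (2 * t) * t powr (-1/2) * (1 - t) powr (-1/2))) \<partial>lborel)"
      by (rule subst_cos) simp
    also have "\<dots> = (\<integral>\<^sup>+t. ennreal (2 ^ q * D powr (- e)) * ennreal (indicator {0<..<1} t * E q t) \<partial>lborel)"
    proof (intro nn_integral_cong)
      fix t :: real
      show "ennreal (indicator {0..1} t * (h q (2 * t) * t powr (-1/2) * (1 - t) powr (-1/2))) = ennreal (2 ^ q * D powr (- e)) * ennreal (indicator {0<..<1} t * E q t)"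
      proof (cases "0 < t \<and> t < 1")
        case True
        have t: "0 < t" "t < 1" using True by auto
        have "h q (2 * t) * t powr (-1/2) * (1 - t) powr (-1/2) = 2 ^ q * D powr (- e) * E q t"
        proof -
          have a1: "D + B * (2 * t) = D * (1 - z * t)"
          proof -
            have zD: "z = - 2 * B / D" unfolding z_def B_def D_def by simp
            show ?thesis unfolding zD using Dp by (simp add: field_simps)
          qed
          have a2: "(1 - z * t) > 0" using z0 t by (simp add: mult_nonpos_nonneg) (smt (verit) mult_nonpos_nonneg)
          have a3: "t ^ q * t powr (-1/2) = t powr (real q + 1/2 - 1)"
            using t by (simp add: powr_realpow[symmetric] powr_add[symmetric])
          have "h q (2 * t) * t powr (-1/2) * (1 - t) powr (-1/2)
              = 2 ^ q * (t ^ q * t powr (-1/2)) * (1 - t) powr (-1/2) * (D powr (- e) * (1 - z * t) powr (- e))"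
            unfolding h_def a1 using Dp a2 by (simp add: powr_mult power_mult_distrib mult_ac)
          also have "\<dots> = 2 ^ q * D powr (- e) * E q t"
            unfolding a3 E_def e_def by (simp add: mult_ac)
          finally show ?thesis .
        qed
        moreover have "E q t \<ge> 0" by (simp add: E_def)
        ultimately show ?thesis using True Dp
          by (simp add: ennreal_mult'[symmetric] mult_ac)
      next
        case False
        then have "t \<le> 0 \<or> t \<ge> 1" by auto
        then show ?thesis by (auto simp: indicator_def)
      qed
    qed
    also have "\<dots> = ennreal (2 ^ q * D powr (- e)) * (\<integral>\<^sup>+t. ennreal (indicator {0<..<1} t * E q t) \<partial>lborel)"
      by (rule nn_integral_cmult) (simp add: E_def)
    finally have eqq: "(\<integral>\<^sup>+\<theta>. ennreal (indicator {0..pi} \<theta> * h q (1 + cos \<theta>)) \<partial>lborel)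
        = ennreal (2 ^ q * D powr (- e)) * (\<integral>\<^sup>+t. ennreal (indicator {0<..<1} t * E q t) \<partial>lborel)" .
    have bnd: "(\<integral>\<^sup>+\<theta>. ennreal (indicator {0..pi} \<theta> * h q (1 + cos \<theta>)) \<partial>lborel) < \<infinity>"
    proof -
      have "(\<integral>\<^sup>+\<theta>. ennreal (indicator {0..pi} \<theta> * h q (1 + cos \<theta>)) \<partial>lborel)
          \<le> (\<integral>\<^sup>+\<theta>. ennreal (2 ^ q * D powr (- e)) * indicator {0..pi} \<theta> \<partial>lborel)"
      proof (intro nn_integral_mono)
        fix \<theta> :: real
        have u: "0 \<le> 1 + cos \<theta>" "1 + cos \<theta> \<le> 2" using cos_ge_minus_one[of \<theta>] cos_le_one[of \<theta>] by linarith+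
        have "h q (1 + cos \<theta>) \<le> 2 ^ q * D powr (- e)"
          unfolding h_def
        proof (rule mult_mono)
          show "(1 + cos \<theta>) ^ q \<le> 2 ^ q" using u by (intro power_mono) auto
          show "(D + B * (1 + cos \<theta>)) powr - e \<le> D powr - e"
            using Dp B0 u e0 by (intro powr_mono2') auto
        qed (use u in auto)
        then show "ennreal (indicator {0..pi} \<theta> * h q (1 + cos \<theta>)) \<le> ennreal (2 ^ q * D powr (- e)) * indicator {0..pi} \<theta>"
          by (auto simp: indicator_def)
      qed
      also have "\<dots> = ennreal (2 ^ q * D powr (- e)) * ennreal pi"
        by (simp add: nn_integral_cmult_indicator)
      also have "\<dots> < \<infinity>" by (simp add: ennreal_mult'[symmetric])
      finally show ?thesis .
    qed
    have pos2: "2 ^ q * D powr (- e) > 0" using Dp by simp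
    have fin: "(\<integral>\<^sup>+t. ennreal (indicator {0<..<1} t * E q t) \<partial>lborel) \<noteq> \<infinity>"
      using bnd unfolding eqq using pos2 Dp by (auto simp: ennreal_mult_top)
    have L: "L q = enn2real (\<integral>\<^sup>+t. ennreal (indicator {0<..<1} t * E q t) \<partial>lborel)"
      unfolding L_def set_lebesgue_integral_def
      by (subst integral_eq_nn_integral) (auto simp: E_def)
    have L0: "L q \<ge> 0" unfolding L by simp
    have "ennreal (c q / pi) * (\<integral>\<^sup>+\<theta>. ennreal (indicator {0..pi} \<theta> * h q (1 + cos \<theta>)) \<partial>lborel)
        = ennreal (c q / pi) * (ennreal (2 ^ q * D powr (- e)) * ennreal (L q))"
      unfolding eqq L using fin by (simp add: ennreal_enn2real_if)
    also have "\<dots> = ennreal (c q / pi * (2 ^ q * D powr (- e)) * L q)"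
      using c0 pos2 L0 by (simp add: ennreal_mult'[symmetric] mult.assoc)
    finally show "ennreal (c q / pi) * (\<integral>\<^sup>+\<theta>. ennreal (indicator {0..pi} \<theta> * h q (1 + cos \<theta>)) \<partial>lborel)
        = ennreal (c q / pi * (2 ^ q * D powr (- e)) * L q)" .
  qed
  also have "\<dots> = ennreal (\<Sum>q\<le>i. c q / pi * (2 ^ q * D powr (- e)) * L q)"
  proof (rule sum_ennreal)
    fix q
    have "L q \<ge> 0" unfolding L_def set_lebesgue_integral_def
      by (intro integral_nonneg_AE) (auto simp: E_def)
    then show "0 \<le> c q / pi * (2 ^ q * D powr (- e)) * L q" using c0 by simp
  qed
  also have "(\<Sum>q\<le>i. c q / pi * (2 ^ q * D powr (- e)) * L q) = mftr_w K \<Delta> m \<mu> i"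
  proof -
    have hyp: "hyp2F1 (m + real i) (real q + 1/2) (real q + 1) z = Gamma (real q + 1) / (Gamma (real q + 1/2) * sqrt pi) * L q" for q
      by (simp add: hyp2F1_def L_def E_def Gamma_one_half_real)
    have Gq: "Gamma (real q + 1/2) > 0" for q :: nat by (intro Gamma_real_pos) simp
    have Gq1: "Gamma (real q + 1) > 0" for q :: nat by (intro Gamma_real_pos) simp
    have D1': "1 - \<Delta> > 0" using D1 by simp
    have "mftr_w K \<Delta> m \<mu> i = Cst * ((1 - \<Delta>) ^ i / (sqrt pi * D powr e)) *
        (\<Sum>q = 0..i. real (i choose q) * Gamma (real q + 1/2) / Gamma (real q + 1) * (2 * \<Delta> / (1 - \<Delta>)) ^ q *
          (Gamma (real q + 1) / (Gamma (real q + 1/2) * sqrt pi) * L q))"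
      unfolding mftr_w_def hyp[unfolded z_def] by (simp add: Cst_def D_def e_def)
    also have "\<dots> = (\<Sum>q\<le>i. c q / pi * (2 ^ q * D powr (- e)) * L q)"
      unfolding sum_distrib_left atLeast0AtMost
    proof (intro sum.cong refl)
      fix q assume q: "q \<in> {..i}"
      have pw: "(1 - \<Delta>) ^ i * (2 * \<Delta> / (1 - \<Delta>)) ^ q = (1 - \<Delta>) ^ (i - q) * 2 ^ q * \<Delta> ^ q"
      proof -
        have "(1 - \<Delta>) ^ i = (1 - \<Delta>) ^ (i - q) * (1 - \<Delta>) ^ q" using q by (simp add: power_add[symmetric])
        then show ?thesis using D1' by (simp add: power_divide power_mult_distrib field_simps)
      qed
      have sp: "sqrt pi * sqrt pi = pi" by simp
      have Dm: "D powr (- e) = 1 / D powr e" by (simp add: powr_minus_divide)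
      show "Cst * ((1 - \<Delta>) ^ i / (sqrt pi * D powr e)) *
          (real (i choose q) * Gamma (real q + 1/2) / Gamma (real q + 1) * (2 * \<Delta> / (1 - \<Delta>)) ^ q *
           (Gamma (real q + 1) / (Gamma (real q + 1/2) * sqrt pi) * L q))
          = c q / pi * (2 ^ q * D powr (- e)) * L q"
      proof -
        have n1: "Gamma (real q + 1/2) \<noteq> 0" using Gq[of q] by linarith
        have n2: "Gamma (real q + 1) \<noteq> 0" using Gq1[of q] by linarith
        show ?thesis unfolding c_def Dm
          by (rule alg_aux[OF n1 n2]) (use Dp pw sp in auto)
      qed
    qed
    finally show ?thesis ..
  qed
  finally show ?thesis .
qed


lemma kms_bound:
  fixes \<kappa> \<mu> m g s :: real
  assumes k: "\<kappa> \<ge> 0" and mu: "\<mu> > 0" and m: "m > 0" and g: "g > 0" and s: "s \<ge> 0"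
  shows "1 - kms_mgf \<kappa> \<mu> m g (- s) \<le> g * s"
proof -
  define a where "a = g / (\<mu> * (1 + \<kappa>))"
  define b where "b = (\<mu> * \<kappa> + m) * a / m"
  define X where "X = 1 + a * s"
  define Y where "Y = 1 + b * s"
  have a0: "a > 0" using g mu k by (simp add: a_def)
  have ba: "b - a = \<mu> * \<kappa> * a / m" using m by (simp add: b_def field_simps)
  have ba0: "b - a \<ge> 0" unfolding ba using mu k a0 m by simp
  have X1: "X \<ge> 1" using a0 s by (simp add: X_def)
  have Y1: "Y \<ge> X" using ba0 s by (simp add: X_def Y_def) (metis mult_right_mono diff_ge_0_iff_ge)
  have L: "kms_mgf \<kappa> \<mu> m g (- s) = X powr (m - \<mu>) * Y powr (- m)"
  proof -
    have e1: "1 - g * (- s) / (\<mu> * (1 + \<kappa>)) = X" by (simp add: X_def a_def)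
    have e2: "1 - (\<mu> * \<kappa> + m) * g * (- s) / (m * \<mu> * (1 + \<kappa>)) = Y"
      by (simp add: Y_def b_def a_def mult_ac)
    show ?thesis unfolding kms_mgf_def e1 e2 ..
  qed
  have Xp: "X > 0" "Y > 0" using X1 Y1 by auto
  have "X powr (m - \<mu>) * Y powr (- m) = exp ((m - \<mu>) * ln X - m * ln Y)"
    using Xp by (simp add: powr_def exp_diff exp_minus field_simps exp_add[symmetric])
  also have "\<dots> \<ge> exp (- (g * s))"
  proof (subst exp_le_cancel_iff)
    have l1: "ln X \<le> a * s" using ln_le_minus_one[OF Xp(1)] by (simp add: X_def)
    have l2: "ln Y - ln X \<le> (b - a) * s"
    proof -
      have "ln Y - ln X = ln (Y / X)" using Xp by (simp add: ln_div)
      also have "\<dots> \<le> Y / X - 1" using Xp by (intro ln_le_minus_one) simp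
      also have "\<dots> = (b - a) * s / X" using Xp by (simp add: X_def Y_def field_simps)
      also have "\<dots> \<le> (b - a) * s" using X1 mult_nonneg_nonneg[OF ba0 s] by (simp add: divide_le_eq mult_le_cancel_left1)
      finally show ?thesis .
    qed
    have "(m - \<mu>) * ln X - m * ln Y = - \<mu> * ln X - m * (ln Y - ln X)" by (simp add: algebra_simps)
    also have "\<dots> \<ge> - \<mu> * (a * s) - m * ((b - a) * s)"
      using l1 l2 mu m by (smt (verit) mult_left_mono mult_minus_left)
    also have "- \<mu> * (a * s) - m * ((b - a) * s) = - (g * s)"
    proof -
      have t1: "m * (\<mu> * \<kappa> * a / m * s) = \<mu> * \<kappa> * a * s" using m by simp
      have t2: "- \<mu> * (a * s) - \<mu> * \<kappa> * a * s = - ((\<mu> * a * (1 + \<kappa>)) * s)" by (simp add: algebra_simps)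
      have t3: "\<mu> * a * (1 + \<kappa>) = g" using mu k by (simp add: a_def)
      show ?thesis unfolding ba t1 t2 t3 ..
    qed
    finally show "- (g * s) \<le> (m - \<mu>) * ln X - m * ln Y" .
  qed
  finally have "kms_mgf \<kappa> \<mu> m g (- s) \<ge> exp (- (g * s))" unfolding L .
  moreover have "exp (- (g * s)) \<ge> 1 - g * s" using exp_ge_add_one_self[of "- (g * s)"] by simp
  ultimately show ?thesis by simp
qed

lemma gamma_lap_bound:
  fixes lam a s :: real assumes "lam > 0" "a > 0" "s \<ge> 0"
  shows "1 - (1 + a * s) powr (- lam) \<le> lam * a * s"
proof -
  have Xp: "1 + a * s > 0" using assms by (simp add: add_pos_nonneg)
  have "(1 + a * s) powr (- lam) = exp (- lam * ln (1 + a * s))" using Xp by (simp add: powr_def)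
  also have "\<dots> \<ge> exp (- (lam * a * s))"
    using ln_le_minus_one[OF Xp] assms by (simp add: mult_left_mono)
  finally have "(1 + a * s) powr (- lam) \<ge> exp (- (lam * a * s))" .
  moreover have "exp (- (lam * a * s)) \<ge> 1 - lam * a * s" using exp_ge_add_one_self[of "- (lam * a * s)"] by simp
  ultimately show ?thesis by simp
qed

lemma lap_int_bound:
  fixes L :: "real \<Rightarrow> real" and C :: real
  assumes C: "C \<ge> 0" and b: "\<And>s. s > 0 \<Longrightarrow> 1 - L s \<le> C * s"
  shows "(\<integral>\<^sup>+s. ennreal (indicator {0<..} s * exp (- s) * (1 - L s) / s) \<partial>lborel) \<le> ennreal C"
proof -
  have "(\<integral>\<^sup>+s. ennreal (indicator {0<..} s * exp (- s) * (1 - L s) / s) \<partial>lborel)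
      \<le> (\<integral>\<^sup>+s. ennreal C * ennreal (indicator {0<..} s * s powr (1 - 1) * exp (- 1 * s)) \<partial>lborel)"
  proof (intro nn_integral_mono)
    fix s :: real
    show "ennreal (indicator {0<..} s * exp (- s) * (1 - L s) / s) \<le> ennreal C * ennreal (indicator {0<..} s * s powr (1 - 1) * exp (- 1 * s))"
    proof (cases "s > 0")
      case True
      have "exp (- s) * (1 - L s) / s \<le> exp (- s) * (C * s) / s"
        using b[OF True] True by (intro divide_right_mono mult_left_mono) auto
      also have "\<dots> = C * exp (- s)" using True by simp
      finally show ?thesis using True C by (simp add: ennreal_mult'[symmetric] ennreal_leI)
    qed simp
  qed
  also have "\<dots> = ennreal C * (\<integral>\<^sup>+s. ennreal (indicator {0<..} s * s powr (1 - 1) * exp (- 1 * s)) \<partial>lborel)"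
    by (rule nn_integral_cmult) simp
  also have "\<dots> = ennreal C * ennreal (Gamma 1 / 1 powr 1)"
    by (subst gamma_nn) simp_all
  also have "\<dots> = ennreal C" by simp
  finally show ?thesis .
qed


lemma r1: "(E::real) / s * (p - p * X) = p * (1 * E * (1 - X) / s)"
  by (simp add: field_simps)

lemma theta_part:
  fixes K \<Delta> m \<mu> gb \<theta> :: real and N :: "real measure"
  assumes K: "K > 0" and D0: "0 \<le> \<Delta>" and D1: "\<Delta> < 1" and m: "m > 0" and mu: "\<mu> > 0" and gb: "gb > 0"
    and th: "\<theta> \<in> {0..pi}"
    and law: "is_kms_law (K * (1 + \<Delta> * cos \<theta>)) \<mu> m (gb * (1 + K * (1 + \<Delta> * cos \<theta>)) / (1 + K)) N"
  shows "(\<integral>\<^sup>+x. ennreal (indicator {0<..} x * ln (1 + x)) \<partial>N)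
       = (\<Sum>i. ennreal (pk (K * (1 + \<Delta> * cos \<theta>)) \<mu> m i) *
            (\<integral>\<^sup>+s. ennreal (indicator {0<..} s * exp (- s) * (1 - (1 + gb / (\<mu> * (1 + K)) * s) powr (- (\<mu> + real i))) / s) \<partial>lborel))"
    and "(\<integral>\<^sup>+x. ennreal (indicator {0<..} x * ln (1 + x)) \<partial>N) \<le> ennreal (2 * gb)"
proof -
  define \<kappa> where "\<kappa> = K * (1 + \<Delta> * cos \<theta>)"
  define g where "g = gb * (1 + \<kappa>) / (1 + K)"
  define a where "a = gb / (\<mu> * (1 + K))"
  have c1: "1 + \<Delta> * cos \<theta> > 0"
  proof -
    have "\<Delta> * cos \<theta> \<ge> - \<Delta>" using mult_left_mono[OF cos_ge_minus_one[of \<theta>] D0] by simp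
    then show ?thesis using D1 by linarith
  qed
  have c2: "1 + \<Delta> * cos \<theta> \<le> 2"
  proof -
    have "\<Delta> * cos \<theta> \<le> \<Delta>" using mult_left_mono[OF cos_le_one[of \<theta>] D0] by simp
    then show ?thesis using D1 by linarith
  qed
  have k0: "\<kappa> > 0" using K c1 by (simp add: \<kappa>_def)
  have kle: "\<kappa> \<le> 2 * K" using K c2 by (simp add: \<kappa>_def)
  have g0: "g > 0" using gb k0 K by (simp add: g_def)
  have gle: "g \<le> 2 * gb"
  proof -
    have "1 + \<kappa> \<le> 2 * (1 + K)" using kle by simp
    then have "gb * (1 + \<kappa>) \<le> gb * (2 * (1 + K))" using gb by (intro mult_left_mono) auto
    then show ?thesis using K by (simp add: g_def divide_le_eq mult_ac)
  qed
  have ga: "g / (\<mu> * (1 + \<kappa>)) = a"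
  proof -
    have "1 + \<kappa> \<noteq> 0" "1 + K \<noteq> 0" "\<mu> \<noteq> 0" using k0 K mu by auto
    then show ?thesis unfolding g_def a_def by (simp add: divide_simps)
  qed
  have a0: "a > 0" using gb mu K by (simp add: a_def)
  have law': "is_kms_law \<kappa> \<mu> m g N" using law by (simp add: \<kappa>_def g_def)
  then have PN: "prob_space N" and sN[measurable_cong]: "sets N = sets borel" and pos: "AE x in N. 0 < x"
    and mgf: "\<And>s. s \<le> 0 \<Longrightarrow> (\<integral>x. exp (s * x) \<partial>N) = kms_mgf \<kappa> \<mu> m g s"
    unfolding is_kms_law_def by auto
  have base: "(\<integral>\<^sup>+x. ennreal (indicator {0<..} x * ln (1 + x)) \<partial>N)
      = (\<integral>\<^sup>+s. ennreal (indicator {0<..} s * exp (- s) * (1 - kms_mgf \<kappa> \<mu> m g (- s)) / s) \<partial>lborel)"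
  proof -
    have "(\<integral>\<^sup>+x. ennreal (indicator {0<..} x * ln (1 + x)) \<partial>N) = (\<integral>\<^sup>+x. ennreal (ln (1 + x)) \<partial>N)"
      by (rule nn_integral_cong_AE) (use pos in \<open>auto elim!: eventually_mono\<close>)
    also have "\<dots> = (\<integral>\<^sup>+s. ennreal (indicator {0<..} s * exp (- s) * (1 - (\<integral>x. exp (- s * x) \<partial>N)) / s) \<partial>lborel)"
      by (rule ln_laplace[OF PN sN]) (use pos in \<open>auto elim!: eventually_mono\<close>)
    also have "\<dots> = (\<integral>\<^sup>+s. ennreal (indicator {0<..} s * exp (- s) * (1 - kms_mgf \<kappa> \<mu> m g (- s)) / s) \<partial>lborel)"
    proof (intro nn_integral_cong)
      fix s :: real
      show "ennreal (indicator {0<..} s * exp (- s) * (1 - (\<integral>x. exp (- s * x) \<partial>N)) / s)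
          = ennreal (indicator {0<..} s * exp (- s) * (1 - kms_mgf \<kappa> \<mu> m g (- s)) / s)"
      proof (cases "s > 0")
        case True
        then have "(\<integral>x. exp (- s * x) \<partial>N) = kms_mgf \<kappa> \<mu> m g (- s)" by (intro mgf) simp
        then show ?thesis by simp
      qed simp
    qed
    finally show ?thesis .
  qed
  show "(\<integral>\<^sup>+x. ennreal (indicator {0<..} x * ln (1 + x)) \<partial>N) \<le> ennreal (2 * gb)"
  proof -
    have "(\<integral>\<^sup>+s. ennreal (indicator {0<..} s * exp (- s) * (1 - kms_mgf \<kappa> \<mu> m g (- s)) / s) \<partial>lborel) \<le> ennreal g"
      by (rule lap_int_bound) (use g0 kms_bound[OF k0[THEN less_imp_le] mu m g0] in auto)
    also have "\<dots> \<le> ennreal (2 * gb)" using gle by (rule ennreal_leI)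
    finally show ?thesis unfolding base .
  qed
  define G where "G i s = indicator {0<..} s * exp (- s) * (1 - (1 + a * s) powr (- (\<mu> + real i))) / s" for i :: nat and s :: real
  have G0: "G i s \<ge> 0" for i s
  proof (cases "s > 0")
    case True
    have "(1 + a * s) powr (- (\<mu> + real i)) \<le> 1"
      using powr_mono2'[of "- (\<mu> + real i)" 1 "1 + a * s"] True a0 mu by simp
    then show ?thesis using True by (simp add: G_def)
  qed (simp add: G_def)
  have pk0: "pk \<kappa> \<mu> m i \<ge> 0" for i using pk_nonneg[of \<kappa> \<mu> m i] k0 mu m by simp
  have "(\<integral>\<^sup>+s. ennreal (indicator {0<..} s * exp (- s) * (1 - kms_mgf \<kappa> \<mu> m g (- s)) / s) \<partial>lborel)
      = (\<integral>\<^sup>+s. (\<Sum>i. ennreal (pk \<kappa> \<mu> m i) * ennreal (G i s)) \<partial>lborel)"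
  proof (intro nn_integral_cong)
    fix s :: real
    show "ennreal (indicator {0<..} s * exp (- s) * (1 - kms_mgf \<kappa> \<mu> m g (- s)) / s) = (\<Sum>i. ennreal (pk \<kappa> \<mu> m i) * ennreal (G i s))"
    proof (cases "s > 0")
      case True
      have ser: "(\<lambda>i. pk \<kappa> \<mu> m i * (1 + a * s) powr (- (\<mu> + real i))) sums kms_mgf \<kappa> \<mu> m g (- s)"
        using kms_series[OF k0[THEN less_imp_le] mu m g0, of s] True ga by simp
      have "(\<lambda>i. pk \<kappa> \<mu> m i - pk \<kappa> \<mu> m i * (1 + a * s) powr (- (\<mu> + real i))) sums (1 - kms_mgf \<kappa> \<mu> m g (- s))"
        by (rule sums_diff[OF pk_sums_1[OF k0[THEN less_imp_le] mu m] ser])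
      then have "(\<lambda>i. (exp (- s) / s) * (pk \<kappa> \<mu> m i - pk \<kappa> \<mu> m i * (1 + a * s) powr (- (\<mu> + real i)))) sums ((exp (- s) / s) * (1 - kms_mgf \<kappa> \<mu> m g (- s)))"
        by (rule sums_mult)
      moreover have "(exp (- s) / s) * (pk \<kappa> \<mu> m i - pk \<kappa> \<mu> m i * (1 + a * s) powr (- (\<mu> + real i))) = pk \<kappa> \<mu> m i * G i s" for i
        using True r1[of "exp (- s)" s "pk \<kappa> \<mu> m i" "(1 + a * s) powr (- (\<mu> + real i))"] by (simp add: G_def)
      ultimately have ss: "(\<lambda>i. pk \<kappa> \<mu> m i * G i s) sums (indicator {0<..} s * exp (- s) * (1 - kms_mgf \<kappa> \<mu> m g (- s)) / s)"
        using True by (simp add: mult_ac)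
      have nn: "0 \<le> indicator {0<..} s * exp (- s) * (1 - kms_mgf \<kappa> \<mu> m g (- s)) / s"
        using sums_le[OF _ sums_zero ss] pk0 G0 by (metis mult_nonneg_nonneg)
      have "(\<lambda>i. ennreal (pk \<kappa> \<mu> m i * G i s)) sums ennreal (indicator {0<..} s * exp (- s) * (1 - kms_mgf \<kappa> \<mu> m g (- s)) / s)"
        using ss pk0 G0 nn by (subst sums_ennreal) auto
      then show ?thesis using pk0 by (simp add: sums_iff ennreal_mult')
    qed (simp add: G_def)
  qed
  also have "\<dots> = (\<Sum>i. ennreal (pk \<kappa> \<mu> m i) * (\<integral>\<^sup>+s. ennreal (G i s) \<partial>lborel))"
    by (subst nn_integral_suminf) (auto simp: G_def nn_integral_cmult)
  finally show "(\<integral>\<^sup>+x. ennreal (indicator {0<..} x * ln (1 + x)) \<partial>N)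
       = (\<Sum>i. ennreal (pk (K * (1 + \<Delta> * cos \<theta>)) \<mu> m i) *
            (\<integral>\<^sup>+s. ennreal (indicator {0<..} s * exp (- s) * (1 - (1 + gb / (\<mu> * (1 + K)) * s) powr (- (\<mu> + real i))) / s) \<partial>lborel))"
    unfolding base by (simp add: G_def a_def \<kappa>_def)
qed


lemma hyp2F1_nonneg:
  assumes "b > 0" "c - b > 0"
  shows "hyp2F1 a b c z \<ge> 0"
proof -
  have "c > 0" using assms by simp
  then have "Gamma c / (Gamma b * Gamma (c - b)) \<ge> 0"
    using assms by (simp add: Gamma_real_pos less_imp_le)
  moreover have "(LINT t:{0<..<1}|lborel. t powr (b - 1) * (1 - t) powr (c - b - 1) * (1 - z * t) powr (- a)) \<ge> 0"
    unfolding set_lebesgue_integral_def by (intro integral_nonneg_AE) auto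
  ultimately show ?thesis unfolding hyp2F1_def by (rule mult_nonneg_nonneg)
qed

lemma w_nonneg:
  assumes K: "K > 0" and D0: "0 \<le> \<Delta>" and D1: "\<Delta> < 1" and m: "m > 0" and mu: "\<mu> > 0"
  shows "mftr_w K \<Delta> m \<mu> i \<ge> 0"
proof -
  have s: "(\<Sum>q = 0..i. real (i choose q) * Gamma (real q + 1/2) / Gamma (real q + 1) *
        (2 * \<Delta> / (1 - \<Delta>)) ^ q *
        hyp2F1 (m + real i) (real q + 1/2) (real q + 1)
               (- 2 * \<mu> * K * \<Delta> / (\<mu> * K * (1 - \<Delta>) + m))) \<ge> 0"
  proof (rule sum_nonneg)
    fix q assume "q \<in> {0..i}"
    have g1: "0 \<le> Gamma (real q + 1/2)" by (intro less_imp_le Gamma_real_pos) simp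
    have g2: "0 \<le> Gamma (real q + 1)" by (intro less_imp_le Gamma_real_pos) simp
    have g3: "0 \<le> (2 * \<Delta> / (1 - \<Delta>)) ^ q" using D0 D1 by simp
    have g4: "0 \<le> hyp2F1 (m + real i) (real q + 1/2) (real q + 1) (- 2 * \<mu> * K * \<Delta> / (\<mu> * K * (1 - \<Delta>) + m))"
      by (rule hyp2F1_nonneg) auto
    show "0 \<le> real (i choose q) * Gamma (real q + 1/2) / Gamma (real q + 1) *
        (2 * \<Delta> / (1 - \<Delta>)) ^ q *
        hyp2F1 (m + real i) (real q + 1/2) (real q + 1)
               (- 2 * \<mu> * K * \<Delta> / (\<mu> * K * (1 - \<Delta>) + m))"
      using g1 g2 g3 g4 by simp
  qed
  have "Gamma (m + real i) > 0" "Gamma m > 0" "Gamma (real i + 1) > 0"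
    using m by (auto intro!: Gamma_real_pos)
  then show ?thesis unfolding mftr_w_def using s K mu m D0 D1
    by (intro mult_nonneg_nonneg divide_nonneg_nonneg) auto
qed


theorem mainTheorem8:
  fixes K \<Delta> m \<mu> gb :: real and f :: "real \<Rightarrow> real"
  assumes "K > 0" and "0 \<le> \<Delta>" and "\<Delta> < 1" and "m > 0" and "\<mu> > 0" and "gb > 0"
    and "is_mftr_pdf K \<Delta> m \<mu> gb f"
  shows "set_integrable lborel {0<..} (\<lambda>x. log 2 (1 + x) * f x) \<and>
    (\<exists>S :: nat \<Rightarrow> real.
       (\<forall>i. (\<lambda>k. 1 / real (Suc k) * Gamma (real (Suc k) + mftr_lambda \<mu> i) *
                 kummerU (real (Suc k) + mftr_lambda \<mu> i) (1 + mftr_lambda \<mu> i)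
                         (mftr_lambda \<mu> i / mftr_nu K \<mu> gb i)) sums S i)
       \<and> (\<lambda>i. mftr_w K \<Delta> m \<mu> i *
               ((mftr_lambda \<mu> i / mftr_nu K \<mu> gb i) powr mftr_lambda \<mu> i
                 / (Gamma (mftr_lambda \<mu> i) * ln 2)) * S i)
           sums (LINT x:{0<..}|lborel. log 2 (1 + x) * f x))"
proof -
  note K = assms(1) and D0 = assms(2) and D1 = assms(3) and m = assms(4) and mu = assms(5) and gb = assms(6)
  define M where "M = density lborel (\<lambda>x. ennreal (f x))"
  have fm[measurable]: "f \<in> borel_measurable borel" and f0: "\<And>x. 0 \<le> f x"
    and law: "is_mftr_law K \<Delta> m \<mu> gb M"
    using assms(7) unfolding is_mftr_pdf_def M_def by auto
  from law have PM: "prob_space M" and sM: "sets M = sets borel" unfolding is_mftr_law_def by auto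
  from law obtain N where
    kms: "\<forall>\<theta>\<in>{0..pi}. is_kms_law (K * (1 + \<Delta> * cos \<theta>)) \<mu> m (gb * (1 + K * (1 + \<Delta> * cos \<theta>)) / (1 + K)) (N \<theta>)"
    and mix: "\<forall>A\<in>sets borel. measure M A = (LINT \<theta>:{0..pi}|lborel. measure (N \<theta>) A) / pi"
    unfolding is_mftr_law_def by blast
  have PN: "prob_space (N \<theta>) \<and> sets (N \<theta>) = sets borel" if "\<theta> \<in> {0..pi}" for \<theta>
    using kms that unfolding is_kms_law_def by auto
  define a where "a = gb / (\<mu> * (1 + K))"
  define z where "z = \<mu> * (1 + K) / gb"
  define lam where "lam i = \<mu> + real i" for i :: nat
  define EG where "EG i = (\<integral>\<^sup>+s. ennreal (indicator {0<..} s * exp (- s) * (1 - (1 + gb / (\<mu> * (1 + K)) * s) powr (- (\<mu> + real i))) / s) \<partial>lborel)" for i :: nat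
  define pkt where "pkt i \<theta> = pk (K * (1 + \<Delta> * cos \<theta>)) \<mu> m i" for i :: nat and \<theta> :: real
  define T where "T = (\<integral>\<^sup>+x. ennreal (indicator {0<..} x * ln (1 + x)) \<partial>M)"
  have a0: "a > 0" and z0: "z > 0" using gb mu K by (simp_all add: a_def z_def)
  have az: "a = 1 / z" by (simp add: a_def z_def)
  have lam0: "lam i > 0" for i using mu by (simp add: lam_def add_pos_nonneg)
  have pktm[measurable]: "pkt i \<in> borel_measurable borel" for i unfolding pkt_def pk_def by measurable
  have T1: "T = (\<integral>\<^sup>+\<theta>. ennreal (indicator {0..pi} \<theta> / pi) * (\<integral>\<^sup>+x. ennreal (indicator {0<..} x * ln (1 + x)) \<partial>N \<theta>) \<partial>lborel)"
    unfolding T_def by (rule mixture_nn[OF PM PN mix sM]) auto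
  have T2: "T = (\<Sum>i. ennreal (mftr_w K \<Delta> m \<mu> i) * EG i)"
  proof -
    have "T = (\<integral>\<^sup>+\<theta>. (\<Sum>i. ennreal (indicator {0..pi} \<theta> / pi) * ennreal (pkt i \<theta>) * EG i) \<partial>lborel)"
      unfolding T1
    proof (intro nn_integral_cong)
      fix \<theta> :: real
      show "ennreal (indicator {0..pi} \<theta> / pi) * (\<integral>\<^sup>+x. ennreal (indicator {0<..} x * ln (1 + x)) \<partial>N \<theta>)
          = (\<Sum>i. ennreal (indicator {0..pi} \<theta> / pi) * ennreal (pkt i \<theta>) * EG i)"
      proof (cases "\<theta> \<in> {0..pi}")
        case True
        show ?thesis unfolding theta_part(1)[OF K D0 D1 m mu gb True kms[rule_format, OF True]]
          by (simp add: EG_def pkt_def mult.assoc)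
      qed simp
    qed
    also have "\<dots> = (\<Sum>i. \<integral>\<^sup>+\<theta>. ennreal (indicator {0..pi} \<theta> / pi) * ennreal (pkt i \<theta>) * EG i \<partial>lborel)"
      by (rule nn_integral_suminf) simp
    also have "\<dots> = (\<Sum>i. ennreal (mftr_w K \<Delta> m \<mu> i) * EG i)"
    proof (intro suminf_cong)
      fix i
      show "(\<integral>\<^sup>+\<theta>. ennreal (indicator {0..pi} \<theta> / pi) * ennreal (pkt i \<theta>) * EG i \<partial>lborel) = ennreal (mftr_w K \<Delta> m \<mu> i) * EG i"
      proof -
        have "(\<integral>\<^sup>+\<theta>. ennreal (indicator {0..pi} \<theta> / pi) * ennreal (pkt i \<theta>) * EG i \<partial>lborel)
            = (\<integral>\<^sup>+\<theta>. ennreal (indicator {0..pi} \<theta> / pi) * ennreal (pkt i \<theta>) \<partial>lborel) * EG i"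
          by (rule nn_integral_multc) simp
        then show ?thesis by (simp add: pkt_def w_integral[OF K D0 D1 m mu])
      qed
    qed
    finally show ?thesis .
  qed
  have Tfin: "T < \<infinity>"
  proof -
    have "T \<le> (\<integral>\<^sup>+\<theta>. ennreal (1 / pi) * ennreal (2 * gb) * indicator {0..pi} \<theta> \<partial>lborel)"
      unfolding T1
    proof (intro nn_integral_mono)
      fix \<theta> :: real
      show "ennreal (indicator {0..pi} \<theta> / pi) * (\<integral>\<^sup>+x. ennreal (indicator {0<..} x * ln (1 + x)) \<partial>N \<theta>)
          \<le> ennreal (1 / pi) * ennreal (2 * gb) * indicator {0..pi} \<theta>"
      proof (cases "\<theta> \<in> {0..pi}")
        case True
        have "ennreal (indicator {0..pi} \<theta> / pi) * (\<integral>\<^sup>+x. ennreal (indicator {0<..} x * ln (1 + x)) \<partial>N \<theta>)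
            \<le> ennreal (1 / pi) * ennreal (2 * gb)"
          using True theta_part(2)[OF K D0 D1 m mu gb True kms[rule_format, OF True]]
          by (intro mult_mono) auto
        then show ?thesis using True by simp
      qed simp
    qed
    also have "\<dots> = ennreal (1 / pi) * ennreal (2 * gb) * ennreal pi"
      by (simp add: nn_integral_cmult_indicator)
    also have "\<dots> < \<infinity>" by (simp add: ennreal_mult_less_top)
    finally show ?thesis .
  qed
  define JJ where "JJ i = (\<integral>\<^sup>+t. ennreal (indicator {0<..} t * exp (- z * t) * t powr (lam i - 1) * ln (1 + t)) \<partial>lborel)" for i
  define c where "c i = z powr lam i / Gamma (lam i)" for i
  have c0: "c i > 0" for i using z0 Gamma_real_pos[OF lam0[of i]] by (simp add: c_def)
  have EGJ: "EG i = ennreal (c i) * JJ i" for i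
  proof -
    have "EG i = (\<integral>\<^sup>+s. ennreal (indicator {0<..} s * exp (- s) * (1 - (1 + s / z) powr (- lam i)) / s) \<partial>lborel)"
      unfolding EG_def lam_def by (simp add: a_def[symmetric] az mult.commute)
    also have "\<dots> = (\<integral>\<^sup>+t. ennreal (indicator {0<..} t * (z powr lam i / Gamma (lam i)) * t powr (lam i - 1) * exp (- z * t) * ln (1 + t)) \<partial>lborel)"
      by (rule gamma_E[OF lam0 z0, symmetric])
    also have "\<dots> = (\<integral>\<^sup>+t. ennreal (c i) * ennreal (indicator {0<..} t * exp (- z * t) * t powr (lam i - 1) * ln (1 + t)) \<partial>lborel)"
    proof (intro nn_integral_cong)
      fix t :: real
      show "ennreal (indicator {0<..} t * (z powr lam i / Gamma (lam i)) * t powr (lam i - 1) * exp (- z * t) * ln (1 + t))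
          = ennreal (c i) * ennreal (indicator {0<..} t * exp (- z * t) * t powr (lam i - 1) * ln (1 + t))"
        using c0[of i] by (subst ennreal_mult'[symmetric]) (auto simp: c_def mult_ac)
    qed
    also have "\<dots> = ennreal (c i) * JJ i" unfolding JJ_def by (rule nn_integral_cmult) simp
    finally show ?thesis .
  qed
  have EGfin: "EG i < \<infinity>" for i
  proof -
    have "EG i \<le> ennreal ((\<mu> + real i) * a)"
      unfolding EG_def a_def[symmetric]
    proof (rule lap_int_bound)
      show "0 \<le> (\<mu> + real i) * a" using mu a0 by simp
      show "1 - (1 + a * s) powr - (\<mu> + real i) \<le> (\<mu> + real i) * a * s" if "0 < s" for s
        using gamma_lap_bound[of "\<mu> + real i" a s] that mu a0 by (simp add: add_pos_nonneg mult_ac)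
    qed
    then show ?thesis by (rule le_less_trans) simp
  qed
  have JJfin: "JJ i \<noteq> \<infinity>" for i
  proof
    assume "JJ i = \<infinity>"
    then have "EG i = \<infinity>" unfolding EGJ using c0[of i] by (simp add: ennreal_mult_top)
    with EGfin[of i] show False by simp
  qed
  define J where "J i = enn2real (JJ i)" for i
  have JJJ: "JJ i = ennreal (J i)" for i using JJfin[of i] by (simp add: J_def ennreal_enn2real_if)
  have J0: "J i \<ge> 0" for i by (simp add: J_def)
  have zeq: "mftr_lambda \<mu> i / mftr_nu K \<mu> gb i = z" for i
  proof -
    have "\<mu> + real i \<noteq> 0" "gb \<noteq> 0" "\<mu> * (K + 1) \<noteq> 0" using mu gb K by (auto simp: add_pos_nonneg)
    then show ?thesis unfolding mftr_lambda_def mftr_nu_def z_def by (simp add: divide_simps)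
  qed
  have lameq: "mftr_lambda \<mu> i = lam i" for i by (simp add: mftr_lambda_def lam_def)
  have Sser: "(\<lambda>k. 1 / real (Suc k) * Gamma (real (Suc k) + mftr_lambda \<mu> i) *
                 kummerU (real (Suc k) + mftr_lambda \<mu> i) (1 + mftr_lambda \<mu> i)
                         (mftr_lambda \<mu> i / mftr_nu K \<mu> gb i)) sums J i" for i
    unfolding zeq unfolding lameq J_def JJ_def by (rule kummer_series[OF lam0 z0]) (use JJfin[of i] in \<open>simp add: JJ_def\<close>)
  have w0: "mftr_w K \<Delta> m \<mu> i \<ge> 0" for i by (rule w_nonneg[OF K D0 D1 m mu])
  have T3: "T = (\<Sum>i. ennreal (mftr_w K \<Delta> m \<mu> i * c i * J i))"
    unfolding T2 EGJ JJJ using w0 c0 by (simp add: ennreal_mult'[symmetric] mult.assoc less_imp_le)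
  have sT: "(\<lambda>i. mftr_w K \<Delta> m \<mu> i * c i * J i) sums enn2real T"
  proof -
    have "(\<lambda>i. enn2real (ennreal (mftr_w K \<Delta> m \<mu> i * c i * J i))) sums enn2real (\<Sum>i. ennreal (mftr_w K \<Delta> m \<mu> i * c i * J i))"
      by (rule ennreal_sums_real) (use Tfin T3 in simp)
    then show ?thesis unfolding T3[symmetric] using w0 c0 J0
      by (simp add: less_imp_le)
  qed
  have ln2: "ln (2::real) > 0" by simp
  have NI: "(\<integral>\<^sup>+x. ennreal (indicator {0<..} x *\<^sub>R (log 2 (1 + x) * f x)) \<partial>lborel) = ennreal (1 / ln 2) * T"
  proof -
    have "T = (\<integral>\<^sup>+x. ennreal (f x) * ennreal (indicator {0<..} x * ln (1 + x)) \<partial>lborel)"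
      unfolding T_def M_def by (subst nn_integral_density) auto
    also have "ennreal (1 / ln 2) * \<dots> = (\<integral>\<^sup>+x. ennreal (1 / ln 2) * (ennreal (f x) * ennreal (indicator {0<..} x * ln (1 + x))) \<partial>lborel)"
      by (rule nn_integral_cmult[symmetric]) simp
    also have "\<dots> = (\<integral>\<^sup>+x. ennreal (indicator {0<..} x *\<^sub>R (log 2 (1 + x) * f x)) \<partial>lborel)"
    proof (intro nn_integral_cong)
      fix x :: real
      show "ennreal (1 / ln 2) * (ennreal (f x) * ennreal (indicator {0<..} x * ln (1 + x))) = ennreal (indicator {0<..} x *\<^sub>R (log 2 (1 + x) * f x))"
      proof (cases "x > 0")
        case True
        then have "ln (1 + x) \<ge> 0" by simp
        then show ?thesis using True f0[of x]
          by (simp add: ennreal_mult'[symmetric] log_def mult_ac)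
      qed simp
    qed
    finally show ?thesis by simp
  qed
  have int: "set_integrable lborel {0<..} (\<lambda>x. log 2 (1 + x) * f x)"
    unfolding set_integrable_def
  proof (rule integrableI_nonneg)
    show "(\<lambda>x. indicator {0<..} x *\<^sub>R (log 2 (1 + x) * f x)) \<in> borel_measurable lborel" by simp
    show "AE x in lborel. 0 \<le> indicator {0<..} x *\<^sub>R (log 2 (1 + x) * f x)"
      using f0 by (auto simp: indicator_def)
    show "(\<integral>\<^sup>+x. ennreal (indicator {0<..} x *\<^sub>R (log 2 (1 + x) * f x)) \<partial>lborel) < \<infinity>"
      unfolding NI using Tfin by (simp add: ennreal_mult_less_top)
  qed
  have LI: "(LINT x:{0<..}|lborel. log 2 (1 + x) * f x) = enn2real T / ln 2"
  proof -
    have "(LINT x:{0<..}|lborel. log 2 (1 + x) * f x) = enn2real (\<integral>\<^sup>+x. ennreal (indicator {0<..} x *\<^sub>R (log 2 (1 + x) * f x)) \<partial>lborel)"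
      unfolding set_lebesgue_integral_def
      by (rule integral_eq_nn_integral) (use f0 in \<open>auto simp: indicator_def\<close>)
    also have "\<dots> = enn2real T / ln 2" unfolding NI by (simp add: enn2real_mult)
    finally show ?thesis .
  qed
  have outer: "(\<lambda>i. mftr_w K \<Delta> m \<mu> i *
               ((mftr_lambda \<mu> i / mftr_nu K \<mu> gb i) powr mftr_lambda \<mu> i
                 / (Gamma (mftr_lambda \<mu> i) * ln 2)) * J i) sums (LINT x:{0<..}|lborel. log 2 (1 + x) * f x)"
  proof -
    have "(\<lambda>i. mftr_w K \<Delta> m \<mu> i * c i * J i / ln 2) sums (enn2real T / ln 2)"
      by (rule sums_divide[OF sT])
    moreover have "mftr_w K \<Delta> m \<mu> i * ((mftr_lambda \<mu> i / mftr_nu K \<mu> gb i) powr mftr_lambda \<mu> i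
                 / (Gamma (mftr_lambda \<mu> i) * ln 2)) * J i = mftr_w K \<Delta> m \<mu> i * c i * J i / ln 2" for i
      unfolding zeq unfolding lameq c_def by simp
    ultimately show ?thesis unfolding LI by simp
  qed
  show ?thesis using int Sser outer by blast
qed


end
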